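(* Let ${\bf R}=(R_1,\dots,R_d)\in\mathbb R_+^d$, $u=\max\{R_1,\dots,R_d\}$, $v=\min\{R_1,\dots,R_d\}$, $p=\max\{\frac12,u\}$, $g({\bf R})=\frac{1}{1/R_1+\cdots+1/R_d}$, and $$E=4^{p/v}\,2^{u/v}\,(1+1/(2v))^{u/(2v^2)}\,(2ep)^{1/(2v)}.$$ Then for all integers $n>E^d$, $$2^{v-p}\sqrt{\frac{1}{e(d+2u)}}\le n^{g({\bf R})}\,a_n(I_d:W_2^{\bf R}(\mathbb T^d)\to L_2(\mathbb T^d))\le 2^{p+u}\Big(1+\frac{2v+1}{2v}\Big)^{\frac{u}{2v}}\sqrt{\frac{2eu}{d}}.$$
   Context: $\mathbb T^d$ carries the normalized Lebesgue measure, $\hat f({\bf k})$ are Fourier coefficients. $W_2^{\bf R}(\mathbb T^d)$ is the Hilbert space of $f\in L_2(\mathbb T^d)$ with norm $\big(\sum_{{\bf k}\in\mathbb Z^d}(1+\sum_{j=1}^d|k_j|^{2R_j})|\hat f({\bf k})|^2\big)^{1/2}$; $I_d$ is the identity embedding; $a_n(T)=\inf\{\|T-A\|:\operatorname{rank}A<n\}$ are the approximation numbers. *)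

theory Defs
  imports "HOL-Analysis.Analysis"
begin

text \<open>Fourier-side model: a function on the d-torus is represented by its
Fourier coefficient family indexed by Z^d. Z^d is modelled as the integer
sequences vanishing from index d on.\<close>

definition Zd :: "nat \<Rightarrow> (nat \<Rightarrow> int) set" where
  "Zd d = {k. \<forall>j\<ge>d. k j = 0}"

definition sob_weight :: "(nat \<Rightarrow> real) \<Rightarrow> nat \<Rightarrow> (nat \<Rightarrow> int) \<Rightarrow> real" where
  "sob_weight R d k = 1 + (\<Sum>j<d. \<bar>real_of_int (k j)\<bar> powr (2 * R j))"

text \<open>L_2(T^d), via Parseval: square-summable coefficient families.\<close>
definition L2seq :: "nat \<Rightarrow> ((nat \<Rightarrow> int) \<Rightarrow> complex) set" where
  "L2seq d = {c. (\<forall>k. k \<notin> Zd d \<longrightarrow> c k = 0) \<and>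
                 (\<lambda>k. (cmod (c k))^2) summable_on Zd d}"

definition L2norm :: "nat \<Rightarrow> ((nat \<Rightarrow> int) \<Rightarrow> complex) \<Rightarrow> real" where
  "L2norm d c = sqrt (\<Sum>\<^sub>\<infinity>k\<in>Zd d. (cmod (c k))^2)"

text \<open>W_2^R(T^d) with the norm from the paper, on the Fourier side.\<close>
definition Wseq :: "(nat \<Rightarrow> real) \<Rightarrow> nat \<Rightarrow> ((nat \<Rightarrow> int) \<Rightarrow> complex) set" where
  "Wseq R d = {c. (\<forall>k. k \<notin> Zd d \<longrightarrow> c k = 0) \<and>
                 (\<lambda>k. sob_weight R d k * (cmod (c k))^2) summable_on Zd d}"

definition Wnorm :: "(nat \<Rightarrow> real) \<Rightarrow> nat \<Rightarrow> ((nat \<Rightarrow> int) \<Rightarrow> complex) \<Rightarrow> real" where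
  "Wnorm R d c = sqrt (\<Sum>\<^sub>\<infinity>k\<in>Zd d. sob_weight R d k * (cmod (c k))^2)"

definition op_norm_WL2 :: "(nat \<Rightarrow> real) \<Rightarrow> nat \<Rightarrow>
    (((nat \<Rightarrow> int) \<Rightarrow> complex) \<Rightarrow> ((nat \<Rightarrow> int) \<Rightarrow> complex)) \<Rightarrow> real" where
  "op_norm_WL2 R d F = Sup {L2norm d (F c) | c. c \<in> Wseq R d \<and> Wnorm R d c \<le> 1}"

definition bounded_linear_WL2 :: "(nat \<Rightarrow> real) \<Rightarrow> nat \<Rightarrow>
    (((nat \<Rightarrow> int) \<Rightarrow> complex) \<Rightarrow> ((nat \<Rightarrow> int) \<Rightarrow> complex)) \<Rightarrow> bool" where
  "bounded_linear_WL2 R d A \<longleftrightarrow>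
     (\<forall>x\<in>Wseq R d. \<forall>y\<in>Wseq R d. \<forall>a b::complex.
        A (\<lambda>k. a * x k + b * y k) = (\<lambda>k. a * A x k + b * A y k)) \<and>
     (\<exists>C. \<forall>c\<in>Wseq R d. L2norm d (A c) \<le> C * Wnorm R d c)"

definition rank_lt_WL2 :: "(nat \<Rightarrow> real) \<Rightarrow> nat \<Rightarrow> nat \<Rightarrow>
    (((nat \<Rightarrow> int) \<Rightarrow> complex) \<Rightarrow> ((nat \<Rightarrow> int) \<Rightarrow> complex)) \<Rightarrow> bool" where
  "rank_lt_WL2 R d n A \<longleftrightarrow>
     (\<exists>B. finite B \<and> card B < n \<and> B \<subseteq> L2seq d \<and>
        (\<forall>c\<in>Wseq R d. \<exists>\<alpha>. A c = (\<lambda>k. \<Sum>b\<in>B. \<alpha> b * b k)))"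

definition approx_num :: "(nat \<Rightarrow> real) \<Rightarrow> nat \<Rightarrow> nat \<Rightarrow> real" where
  "approx_num R d n = Inf {op_norm_WL2 R d (\<lambda>c k. c k - A c k) | A.
       bounded_linear_WL2 R d A \<and> rank_lt_WL2 R d n A}"

end

theory Submission
  imports Defs
begin

lemma e_gt_27: "exp 1 > (27/10::real)"
  using e_approx_32 by (simp add: abs_if split: if_split_asm)

lemma bernoulli_powr:
  fixes t a :: real
  assumes "1 \<le> t" "1 \<le> a"
  shows "1 + a * (t - 1) \<le> t powr a"
proof -
  have tp: "t > 0" using assms by simp
  have e1: "t powr a = t * t powr (a - 1)"
    using tp by (simp add: powr_diff)
  have e2: "t powr (a - 1) \<ge> 1 + (a - 1) * ln t"
    using tp by (simp add: powr_def)
  have e3: "ln t \<ge> 1 - 1 / t"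
  proof -
    have "ln (1/t) \<le> 1/t - 1" using tp by (intro ln_le_minus_one) simp
    then show ?thesis using tp by (simp add: ln_div)
  qed
  have "(a - 1) * (1 - 1/t) \<le> (a - 1) * ln t"
    using e3 assms by (intro mult_left_mono) auto
  then have "1 + (a - 1) * (1 - 1/t) \<le> t powr (a - 1)" using e2 by linarith
  then have "t * (1 + (a - 1) * (1 - 1/t)) \<le> t * t powr (a - 1)"
    using tp by (intro mult_left_mono) auto
  also have "t * (1 + (a - 1) * (1 - 1/t)) = 1 + a * (t - 1)"
    using tp by (simp add: field_simps)
  finally show ?thesis using e1 by simp
qed

lemma exp_le_moment:
  fixes t q :: real
  assumes "0 < t" "0 < q"
  shows "exp (-t) \<le> (q / exp 1) powr q * t powr (-q)"
proof -
  have "ln (t/q) \<le> t/q - 1" using assms by (intro ln_le_minus_one) simp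
  then have "q * ln (t/q) \<le> q * (t/q - 1)" using assms by (intro mult_left_mono) auto
  moreover have "q * ln (t/q) = q * ln t - q * ln q" using assms by (simp add: ln_div algebra_simps)
  moreover have "q * (t/q - 1) = t - q" using assms by (simp add: field_simps)
  ultimately have h: "q * ln t - q * ln q \<le> t - q" by simp
  have r: "(q / exp 1) powr q * t powr (-q) = exp (q * (ln q - 1) - q * ln t)"
  proof -
    have "(q / exp 1) powr q = exp (q * (ln q - 1))" using assms by (simp add: powr_def ln_div)
    moreover have "t powr (-q) = exp (- (q * ln t))" using assms by (simp add: powr_def)
    ultimately show ?thesis by (simp add: mult_exp_exp algebra_simps)
  qed
  have "-t \<le> q * (ln q - 1) - q * ln t" using h by (simp add: algebra_simps)
  then show ?thesis unfolding r by simp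
qed

lemma telescope_term:
  fixes m a :: real
  assumes "1 < m" "0 < a"
  shows "m powr (-(1+a)) \<le> (1/a) * ((m-1) powr (-a) - m powr (-a))"
proof -
  define r where "r = m / (m - 1)"
  have rp: "r > 0" using assms by (simp add: r_def)
  have e1: "(m-1) powr (-a) = m powr (-a) * r powr a"
    using assms by (simp add: r_def powr_divide powr_minus field_simps)
  have lr: "ln r \<ge> 1 / m"
  proof -
    have "ln (1/r) \<le> 1/r - 1" using rp by (intro ln_le_minus_one) simp
    moreover have "1/r - 1 = - (1/m)" using assms by (simp add: r_def field_simps)
    ultimately show ?thesis using rp by (simp add: ln_div)
  qed
  have "r powr a \<ge> 1 + a * ln r" using rp by (simp add: powr_def)
  moreover have "a * ln r \<ge> a * (1/m)" using lr assms by (intro mult_left_mono) auto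
  ultimately have "r powr a \<ge> 1 + a / m" by simp
  then have "m powr (-a) * r powr a \<ge> m powr (-a) * (1 + a/m)"
    by (intro mult_left_mono) auto
  moreover have "m powr (-(1+a)) = m powr (-a) / m"
    using assms by (simp add: powr_diff powr_minus field_simps powr_add)
  ultimately have "a * m powr (-(1+a)) \<le> (m-1) powr (-a) - m powr (-a)"
  proof -
    assume A: "m powr (-a) * r powr a \<ge> m powr (-a) * (1 + a/m)" and B: "m powr (-(1+a)) = m powr (-a) / m"
    have "a * m powr (-(1+a)) = m powr (-a) * (a/m)" using B by simp
    also have "\<dots> \<le> m powr (-a) * r powr a - m powr (-a)" using A by (simp add: algebra_simps)
    finally show ?thesis using e1 by (simp add: mult.commute)
  qed
  then show ?thesis using assms by (simp add: field_simps)
qed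

lemma split_sum_k0:
  fixes f :: "nat \<Rightarrow> real"
  assumes "\<And>m. 0 \<le> f m"
  shows "(\<Sum>m\<in>{1..M}. f m) \<le> (\<Sum>m\<in>{1..k}. f m) + (\<Sum>m\<in>{k+1..k+M}. f m)"
proof -
  have "(\<Sum>m\<in>{1..M}. f m) \<le> (\<Sum>m\<in>{1..k+M}. f m)"
    using assms by (intro sum_mono2) auto
  also have "\<dots> = (\<Sum>m\<in>{1..k}. f m) + (\<Sum>m\<in>{k+1..k+M}. f m)"
    by (rule sum.ub_add_nat) simp
  finally show ?thesis .
qed

lemma geom_tail:
  fixes z y :: real and k :: nat
  assumes "z > 0"
  shows "(\<Sum>m\<in>{k+1..k+N}. exp (-(z * (real m - y))))
        = (exp (-(z * (real k - y))) - exp (-(z * (real (k+N) - y)))) / (exp z - 1)"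
proof (induction N)
  case 0
  then show ?case by simp
next
  case (Suc N)
  have ez: "exp z - 1 > 0" using assms by simp
  have "{k+1..k + Suc N} = insert (k + Suc N) {k+1..k+N}" by auto
  then have "(\<Sum>m\<in>{k+1..k+Suc N}. exp (-(z * (real m - y))))
      = exp (-(z * (real (k + Suc N) - y))) + (\<Sum>m\<in>{k+1..k+N}. exp (-(z * (real m - y))))"
    by simp
  also have "\<dots> = exp (-(z * (real (k + Suc N) - y))) +
     (exp (-(z * (real k - y))) - exp (-(z * (real (k+N) - y)))) / (exp z - 1)"
    using Suc by simp
  also have "exp (-(z * (real (k+N) - y))) = exp (-(z * (real (k + Suc N) - y))) * exp z"
    by (simp add: mult_exp_exp algebra_simps)
  finally show ?case using ez by (simp add: field_simps)
qed

lemma sum_a_ge1: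
  fixes a y :: real and M :: nat
  assumes a: "1 \<le> a" and y: "0 < y"
  shows "(\<Sum>m\<in>{1..M}. exp (-((real m / y) powr a))) \<le> (1 + 1/(2*a)) * y"
proof -
  define f where "f m = exp (-((real m / y) powr a))" for m :: nat
  define k where "k = nat \<lfloor>y\<rfloor>"
  have k1: "real k \<le> y" "y < real k + 1" using y unfolding k_def by linarith+
  define z where "z = a / y"
  have z: "z > 0" using a y by (simp add: z_def)
  define \<delta> where "\<delta> = real k + 1 - y"
  have d: "0 < \<delta>" "\<delta> \<le> 1" using k1 by (auto simp: \<delta>_def)
  have "(\<Sum>m\<in>{1..M}. f m) \<le> (\<Sum>m\<in>{1..k}. f m) + (\<Sum>m\<in>{k+1..k+M}. f m)"
    by (rule split_sum_k0) (simp add: f_def)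
  moreover have "(\<Sum>m\<in>{1..k}. f m) \<le> real k"
  proof -
    have "(\<Sum>m\<in>{1..k}. f m) \<le> (\<Sum>m\<in>{1..k}. 1)"
      by (intro sum_mono) (simp add: f_def)
    then show ?thesis by simp
  qed
  moreover have "(\<Sum>m\<in>{k+1..k+M}. f m) \<le> (\<Sum>m\<in>{k+1..k+M}. exp (-1) * exp (-(z * (real m - y))))"
  proof (intro sum_mono)
    fix m assume "m \<in> {k+1..k+M}"
    then have "real m \<ge> real k + 1" by auto
    then have t1: "real m / y \<ge> 1" using k1 y by (simp add: field_simps)
    have "1 + a * (real m / y - 1) \<le> (real m / y) powr a"
      using bernoulli_powr[OF t1 a] .
    moreover have "a * (real m / y - 1) = z * (real m - y)" using y by (simp add: z_def field_simps)
    ultimately have "-((real m / y) powr a) \<le> -1 + -(z * (real m - y))" by simp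
    then show "f m \<le> exp (-1) * exp (-(z * (real m - y)))"
      unfolding f_def mult_exp_exp by simp
  qed
  moreover have "(\<Sum>m\<in>{k+1..k+M}. exp (-1) * exp (-(z * (real m - y))))
       \<le> exp (-1) * ((1 - \<delta>) + 1 / z)"
  proof -
    have ez: "exp z - 1 > 0" using z by simp
    have "(\<Sum>m\<in>{k+1..k+M}. exp (-1) * exp (-(z * (real m - y))))
         = exp (-1) * ((exp (-(z * (real k - y))) - exp (-(z * (real (k+M) - y)))) / (exp z - 1))"
      by (subst sum_distrib_left[symmetric], subst geom_tail[OF z], rule refl)
    also have "\<dots> \<le> exp (-1) * (exp (-(z * (real k - y))) / (exp z - 1))"
      using ez by (intro mult_left_mono divide_right_mono) auto
    also have "exp (-(z * (real k - y))) \<le> (1 - \<delta>) * exp z + \<delta>"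
    proof -
      have "exp ((1 - \<delta>) *\<^sub>R z + \<delta> *\<^sub>R 0) \<le> (1 - \<delta>) * exp z + \<delta> * exp 0"
        using convex_onD[OF exp_convex, of \<delta> z 0] d by simp
      moreover have "(1 - \<delta>) *\<^sub>R z + \<delta> *\<^sub>R 0 = -(z * (real k - y))"
        by (simp add: \<delta>_def algebra_simps)
      ultimately show ?thesis by simp
    qed
    then have "exp (-(z * (real k - y))) / (exp z - 1) \<le> ((1 - \<delta>) * exp z + \<delta>) / (exp z - 1)"
      using ez by (intro divide_right_mono) auto
    also have "((1 - \<delta>) * exp z + \<delta>) / (exp z - 1) = (1 - \<delta>) + 1 / (exp z - 1)"
      using ez by (simp add: field_simps)
    also have "1 / (exp z - 1) \<le> 1 / z"
    proof -
      have "1 + z \<le> exp z" by (rule exp_ge_add_one_self)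
      then have "z \<le> exp z - 1" by linarith
      then show ?thesis using z by (intro divide_left_mono) auto
    qed
    finally show ?thesis by (simp add: mult_left_mono)
  qed
  moreover have "exp (-1::real) \<le> 1/2"
  proof -
    have "2 \<le> exp (1::real)" using exp_ge_add_one_self[of 1] by simp
    then show ?thesis by (simp add: exp_minus field_simps)
  qed
  moreover have "exp (-1) * ((1 - \<delta>) + 1 / z) \<le> 1/2 * ((1 - \<delta>) + 1 / z)"
    using d z \<open>exp (-1::real) \<le> 1/2\<close> by (intro mult_right_mono) auto
  ultimately have "(\<Sum>m\<in>{1..M}. f m) \<le> real k + 1/2 * ((1 - \<delta>) + 1 / z)"
    by linarith
  also have "\<dots> \<le> y + 1/(2*z)" using d k1 by (simp add: \<delta>_def field_simps)
  also have "\<dots> = (1 + 1/(2*a)) * y" using a y by (simp add: z_def field_simps)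
  finally show ?thesis unfolding f_def .
qed

lemma telescope_sum:
  fixes a :: real and k :: nat
  assumes "1 \<le> k" "0 < a"
  shows "(\<Sum>m\<in>{k+1..k+N}. real m powr (-(1+a))) \<le> (1/a) * (real k powr (-a) - real (k+N) powr (-a))"
proof (induction N)
  case 0
  then show ?case by simp
next
  case (Suc N)
  have "{k+1..k + Suc N} = insert (k + Suc N) {k+1..k+N}" by auto
  then have "(\<Sum>m\<in>{k+1..k+Suc N}. real m powr (-(1+a)))
      = real (k + Suc N) powr (-(1+a)) + (\<Sum>m\<in>{k+1..k+N}. real m powr (-(1+a)))"
    by simp
  also have "real (k + Suc N) powr (-(1+a)) \<le> (1/a) * ((real (k + Suc N) - 1) powr (-a) - real (k + Suc N) powr (-a))"
    using assms by (intro telescope_term) auto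
  also have "real (k + Suc N) - 1 = real (k + N)" by simp
  finally show ?case using Suc assms by (simp add: field_simps)
qed

lemma sum_a_lt1:
  fixes a y :: real and M :: nat
  assumes a: "0 < a" "a < 1" and y: "0 < y"
  shows "(\<Sum>m\<in>{1..M}. exp (-((real m / y) powr a)))
     \<le> (1 + 2 * (1/a) * ((1/a + 1) / exp 1) powr (1/a + 1)) * y"
proof -
  define f where "f m = exp (-((real m / y) powr a))" for m :: nat
  define q where "q = 1/a + 1"
  define C where "C = (q / exp 1) powr q"
  have "1/a > 0" using a by simp
  then have q: "q > 0" unfolding q_def by linarith
  have C: "C \<ge> 0" by (simp add: C_def)
  define k where "k = nat \<lfloor>y\<rfloor>"
  have k1: "real k \<le> y" "y < real k + 1" using y unfolding k_def by linarith+
  have fb: "f m \<le> C * y powr (1+a) * real m powr (-(1+a))" if "m \<ge> 1" for m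
  proof -
    have mp: "real m > 0" using that by simp
    have tp: "(real m / y) powr a > 0" using mp y by simp
    have "f m \<le> C * ((real m / y) powr a) powr (-q)"
      unfolding f_def C_def using exp_le_moment[OF tp q] .
    also have "((real m / y) powr a) powr (-q) = (real m / y) powr (-(1+a))"
    proof -
      have "a * -q = -(1+a)" using a by (simp add: q_def field_simps)
      then show ?thesis by (simp add: powr_powr)
    qed
    also have "\<dots> = real m powr (-(1+a)) / y powr (-(1+a))"
      using mp y by (intro powr_divide)
    also have "y powr (-(1+a)) = 1 / y powr (1+a)" by (rule powr_minus_divide)
    also have "real m powr (-(1+a)) / (1 / y powr (1+a)) = y powr (1+a) * real m powr (-(1+a))"
      by simp
    finally show ?thesis by (simp add: mult.assoc)
  qed
  have "(\<Sum>m\<in>{1..M}. f m) \<le> (\<Sum>m\<in>{1..k}. f m) + (\<Sum>m\<in>{k+1..k+M}. f m)"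
    by (rule split_sum_k0) (simp add: f_def)
  moreover have "(\<Sum>m\<in>{1..k}. f m) \<le> y"
  proof -
    have "(\<Sum>m\<in>{1..k}. f m) \<le> (\<Sum>m\<in>{1..k}. 1)"
      by (intro sum_mono) (simp add: f_def)
    then show ?thesis using k1 by simp
  qed
  moreover have "(\<Sum>m\<in>{k+1..k+M}. f m) \<le> C * y powr (1+a) * (\<Sum>m\<in>{k+1..k+M}. real m powr (-(1+a)))"
    unfolding sum_distrib_left by (intro sum_mono fb) auto
  moreover have "y powr (1+a) * (\<Sum>m\<in>{k+1..k+M}. real m powr (-(1+a))) \<le> 2 * (1/a) * y"
  proof (cases "k = 0")
    case True
    have y1: "y < 1" using k1 True by simp
    have "(\<Sum>m\<in>{1..M}. real m powr (-(1+a))) \<le> (\<Sum>m\<in>{1..1}. real m powr (-(1+a))) + (\<Sum>m\<in>{1+1..1+M}. real m powr (-(1+a)))"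
      by (rule split_sum_k0) simp
    also have "(\<Sum>m\<in>{1+1..1+M}. real m powr (-(1+a))) \<le> (1/a) * (real 1 powr (-a) - real (1+M) powr (-a))"
      using a by (intro telescope_sum) auto
    also have "\<dots> \<le> 1/a" using a by (simp add: divide_right_mono)
    finally have s1: "(\<Sum>m\<in>{1..M}. real m powr (-(1+a))) \<le> 1 + 1/a" by simp
    have "y powr (1+a) \<le> y powr 1" using y y1 a by (intro powr_mono') auto
    then have yp: "y powr (1+a) \<le> y" using y by simp
    have "y powr (1+a) * (\<Sum>m\<in>{1..M}. real m powr (-(1+a))) \<le> y * (1 + 1/a)"
      using s1 yp y by (intro mult_mono) (auto intro: sum_nonneg)
    also have "\<dots> \<le> 2 * (1/a) * y" using a y by (simp add: field_simps)
    finally show ?thesis using True by simp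
  next
    case False
    then have k1': "1 \<le> k" by simp
    have "(\<Sum>m\<in>{k+1..k+M}. real m powr (-(1+a))) \<le> (1/a) * (real k powr (-a) - real (k+M) powr (-a))"
      using telescope_sum[OF k1' a(1)] .
    also have "\<dots> \<le> (1/a) * real k powr (-a)" using a by (simp add: divide_right_mono)
    finally have s: "(\<Sum>m\<in>{k+1..k+M}. real m powr (-(1+a))) \<le> (1/a) * real k powr (-a)" .
    have kp: "real k > 0" using k1' by simp
    have "y powr (1+a) * ((1/a) * real k powr (-a)) = (1/a) * y * (y / real k) powr a"
      using y kp by (simp add: powr_add powr_divide powr_minus field_simps)
    also have "(y / real k) powr a \<le> (y / real k) powr 1"
      using a y kp k1 by (intro powr_mono) (auto simp: field_simps)
    also have "(y / real k) powr 1 \<le> 2"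
      using y kp k1 k1' by (simp add: field_simps)
    finally have "y powr (1+a) * ((1/a) * real k powr (-a)) \<le> 2 * (1/a) * y"
      using a y by (simp add: mult_left_mono field_simps)
    moreover have "y powr (1+a) * (\<Sum>m\<in>{k+1..k+M}. real m powr (-(1+a))) \<le> y powr (1+a) * ((1/a) * real k powr (-a))"
      using s by (intro mult_left_mono) auto
    ultimately show ?thesis by linarith
  qed
  ultimately have "(\<Sum>m\<in>{1..M}. f m) \<le> y + C * (2 * (1/a) * y)"
    using C by (smt (verit) mult_left_mono mult.assoc)
  also have "\<dots> = (1 + 2 * (1/a) * C) * y" by (simp add: algebra_simps)
  finally show ?thesis unfolding f_def C_def q_def .
qed

lemma lin_dep_exists:
  fixes \<alpha> :: "'i \<Rightarrow> 'b \<Rightarrow> complex"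
  assumes "finite B" "finite I" "card B < card I"
  shows "\<exists>\<gamma>. (\<exists>i\<in>I. \<gamma> i \<noteq> 0) \<and> (\<forall>b\<in>B. (\<Sum>i\<in>I. \<gamma> i * \<alpha> i b) = 0)"
  using assms
proof (induction B arbitrary: I \<alpha> rule: finite_induct)
  case empty
  then have "I \<noteq> {}" by auto
  then show ?case by (intro exI[of _ "\<lambda>_. 1"]) auto
next
  case (insert b0 B)
  show ?case
  proof (cases "\<forall>i\<in>I. \<alpha> i b0 = 0")
    case True
    have "card B < card I" using insert by simp
    then obtain \<gamma> where g: "(\<exists>i\<in>I. \<gamma> i \<noteq> 0)" "(\<forall>b\<in>B. (\<Sum>i\<in>I. \<gamma> i * \<alpha> i b) = 0)"
      using insert.IH[OF insert.prems(1) \<open>card B < card I\<close>] by blast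
    then show ?thesis using True by (intro exI[of _ \<gamma>]) auto
  next
    case False
    then obtain i0 where i0: "i0 \<in> I" "\<alpha> i0 b0 \<noteq> 0" by auto
    define I' where "I' = I - {i0}"
    have fI': "finite I'" using insert by (simp add: I'_def)
    have cI': "card B < card I'" using insert i0 by (simp add: I'_def)
    define \<alpha>' where "\<alpha>' i b = \<alpha> i b - (\<alpha> i b0 / \<alpha> i0 b0) * \<alpha> i0 b" for i b
    obtain \<gamma>' where g': "(\<exists>i\<in>I'. \<gamma>' i \<noteq> 0)" "(\<forall>b\<in>B. (\<Sum>i\<in>I'. \<gamma>' i * \<alpha>' i b) = 0)"
      using insert.IH[OF fI' cI', of \<alpha>'] by blast
    define s where "s = (\<Sum>i\<in>I'. \<gamma>' i * \<alpha> i b0)"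
    define \<gamma> where "\<gamma> i = (if i = i0 then - s / \<alpha> i0 b0 else \<gamma>' i)" for i
    have sumI: "(\<Sum>i\<in>I. \<gamma> i * \<alpha> i b) = \<gamma> i0 * \<alpha> i0 b + (\<Sum>i\<in>I'. \<gamma>' i * \<alpha> i b)" for b
    proof -
      have "(\<Sum>i\<in>I. \<gamma> i * \<alpha> i b) = \<gamma> i0 * \<alpha> i0 b + (\<Sum>i\<in>I'. \<gamma> i * \<alpha> i b)"
        using i0 insert.prems(1) unfolding I'_def by (simp add: sum.remove)
      moreover have "(\<Sum>i\<in>I'. \<gamma> i * \<alpha> i b) = (\<Sum>i\<in>I'. \<gamma>' i * \<alpha> i b)"
        by (intro sum.cong) (auto simp: \<gamma>_def I'_def)
      ultimately show ?thesis by simp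
    qed
    have "\<forall>b\<in>insert b0 B. (\<Sum>i\<in>I. \<gamma> i * \<alpha> i b) = 0"
    proof
      fix b assume b: "b \<in> insert b0 B"
      show "(\<Sum>i\<in>I. \<gamma> i * \<alpha> i b) = 0"
      proof (cases "b = b0")
        case True
        have "(\<Sum>i\<in>I. \<gamma> i * \<alpha> i b0) = \<gamma> i0 * \<alpha> i0 b0 + s" unfolding s_def by (rule sumI)
        also have "\<gamma> i0 * \<alpha> i0 b0 = - s" using i0 by (simp add: \<gamma>_def)
        finally show ?thesis using True by simp
      next
        case False
        then have bB: "b \<in> B" using b by simp
        have "(\<Sum>i\<in>I'. \<gamma>' i * \<alpha> i b) = (\<Sum>i\<in>I'. \<gamma>' i * \<alpha>' i b + (\<gamma>' i * \<alpha> i b0) * (\<alpha> i0 b / \<alpha> i0 b0))"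
          by (intro sum.cong) (auto simp: \<alpha>'_def algebra_simps)
        also have "\<dots> = (\<Sum>i\<in>I'. \<gamma>' i * \<alpha>' i b) + s * (\<alpha> i0 b / \<alpha> i0 b0)"
          by (simp only: sum.distrib s_def sum_distrib_right)
        also have "\<dots> = s * (\<alpha> i0 b / \<alpha> i0 b0)" using g' bB by simp
        finally have X: "(\<Sum>i\<in>I'. \<gamma>' i * \<alpha> i b) = s * (\<alpha> i0 b / \<alpha> i0 b0)" .
        have "(\<Sum>i\<in>I. \<gamma> i * \<alpha> i b) = \<gamma> i0 * \<alpha> i0 b + s * (\<alpha> i0 b / \<alpha> i0 b0)"
          using sumI[of b] X by simp
        also have "\<gamma> i0 * \<alpha> i0 b = - s * (\<alpha> i0 b / \<alpha> i0 b0)" by (simp add: \<gamma>_def)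
        finally show ?thesis by simp
      qed
    qed
    moreover have "\<exists>i\<in>I. \<gamma> i \<noteq> 0"
      using g'(1) by (auto simp: \<gamma>_def I'_def)
    ultimately show ?thesis by blast
  qed
qed

lemma sw_ge1: "1 \<le> sob_weight R d k"
  unfolding sob_weight_def by (simp add: sum_nonneg)

lemma sw_nonneg: "0 \<le> sob_weight R d k"
  using sw_ge1[of R d k] by linarith

lemma infsum_fin:
  fixes h :: "'a \<Rightarrow> real"
  assumes "finite F" "F \<subseteq> A" "\<And>x. x \<in> A - F \<Longrightarrow> h x = 0"
  shows "infsum h A = sum h F" "h summable_on A"
proof -
  have "infsum h F = infsum h A"
    using assms by (intro infsum_cong_neutral) auto
  then show "infsum h A = sum h F" using assms by simp
  have "h summable_on F \<longleftrightarrow> h summable_on A"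
    using assms by (intro summable_on_cong_neutral) auto
  then show "h summable_on A" using assms by simp
qed

lemma sq_add_le: "(cmod (u + v))\<^sup>2 \<le> 2 * (cmod u)\<^sup>2 + 2 * (cmod v)\<^sup>2"
proof -
  have "cmod (u + v) \<le> cmod u + cmod v" by (rule norm_triangle_ineq)
  then have "(cmod (u + v))\<^sup>2 \<le> (cmod u + cmod v)\<^sup>2" by (intro power_mono) auto
  also have "\<dots> \<le> 2 * (cmod u)\<^sup>2 + 2 * (cmod v)\<^sup>2"
  proof -
    have "(cmod u + cmod v)\<^sup>2 + (cmod u - cmod v)\<^sup>2 = 2 * (cmod u)\<^sup>2 + 2 * (cmod v)\<^sup>2"
      by (simp add: power2_eq_square algebra_simps)
    moreover have "0 \<le> (cmod u - cmod v)\<^sup>2" by simp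
    ultimately show ?thesis by linarith
  qed
  finally show ?thesis .
qed

lemma W_sq:
  assumes "c \<in> Wseq R d"
  shows "(\<lambda>k. (cmod (c k))\<^sup>2) summable_on Zd d"
    "infsum (\<lambda>k. (cmod (c k))\<^sup>2) (Zd d) \<le> (Wnorm R d c)\<^sup>2"
    "0 \<le> infsum (\<lambda>k. sob_weight R d k * (cmod (c k))\<^sup>2) (Zd d)"
    "(Wnorm R d c)\<^sup>2 = infsum (\<lambda>k. sob_weight R d k * (cmod (c k))\<^sup>2) (Zd d)"
proof -
  have s: "(\<lambda>k. sob_weight R d k * (cmod (c k))\<^sup>2) summable_on Zd d"
    using assms by (simp add: Wseq_def)
  have le: "(cmod (c k))\<^sup>2 \<le> sob_weight R d k * (cmod (c k))\<^sup>2" for k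
    using sw_ge1[of R d k] by (simp add: mult_le_cancel_right1)
  show s2: "(\<lambda>k. (cmod (c k))\<^sup>2) summable_on Zd d"
    by (rule summable_on_comparison_test[OF s]) (use le in auto)
  show nn: "0 \<le> infsum (\<lambda>k. sob_weight R d k * (cmod (c k))\<^sup>2) (Zd d)"
    by (intro infsum_nonneg) (simp add: sw_nonneg)
  show eq: "(Wnorm R d c)\<^sup>2 = infsum (\<lambda>k. sob_weight R d k * (cmod (c k))\<^sup>2) (Zd d)"
    using nn by (simp add: Wnorm_def)
  show "infsum (\<lambda>k. (cmod (c k))\<^sup>2) (Zd d) \<le> (Wnorm R d c)\<^sup>2"
    unfolding eq by (intro infsum_mono s s2 le)
qed

lemma L2norm_nonneg: "0 \<le> L2norm d c"
  unfolding L2norm_def by (simp add: infsum_nonneg)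

lemma W_closed:
  assumes "x \<in> Wseq R d" "y \<in> Wseq R d"
  shows "(\<lambda>k. a * x k + b * y k) \<in> Wseq R d"
proof -
  have sx: "(\<lambda>k. sob_weight R d k * (cmod (x k))\<^sup>2) summable_on Zd d"
    and sy: "(\<lambda>k. sob_weight R d k * (cmod (y k))\<^sup>2) summable_on Zd d"
    using assms by (auto simp: Wseq_def)
  have s: "(\<lambda>k. 2 * (cmod a)\<^sup>2 * (sob_weight R d k * (cmod (x k))\<^sup>2) + 2 * (cmod b)\<^sup>2 * (sob_weight R d k * (cmod (y k))\<^sup>2)) summable_on Zd d"
    by (intro summable_on_add summable_on_cmult_right sx sy)
  have "sob_weight R d k * (cmod (a * x k + b * y k))\<^sup>2 \<le> 2 * (cmod a)\<^sup>2 * (sob_weight R d k * (cmod (x k))\<^sup>2) + 2 * (cmod b)\<^sup>2 * (sob_weight R d k * (cmod (y k))\<^sup>2)" for k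
  proof -
    have "sob_weight R d k * (cmod (a * x k + b * y k))\<^sup>2 \<le> sob_weight R d k * (2 * (cmod (a * x k))\<^sup>2 + 2 * (cmod (b * y k))\<^sup>2)"
      using sw_ge1[of R d k] by (intro mult_left_mono sq_add_le) auto
    then show ?thesis by (simp add: norm_mult power_mult_distrib algebra_simps)
  qed
  then have "(\<lambda>k. sob_weight R d k * (cmod (a * x k + b * y k))\<^sup>2) summable_on Zd d"
    by (intro summable_on_comparison_test[OF s]) (simp_all add: sw_nonneg)
  then show ?thesis using assms by (auto simp: Wseq_def)
qed

lemma W_zero: "(\<lambda>k. 0) \<in> Wseq R d"
  by (simp add: Wseq_def)

lemma W_sum:
  assumes "finite I" "\<And>i. i \<in> I \<Longrightarrow> v i \<in> Wseq R d"
  shows "(\<lambda>j. \<Sum>i\<in>I. \<gamma> i * v i j) \<in> Wseq R d"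
  using assms
proof (induction I rule: finite_induct)
  case empty
  then show ?case by (simp add: W_zero)
next
  case (insert i0 I)
  have "(\<lambda>k. \<gamma> i0 * v i0 k + 1 * (\<Sum>i\<in>I. \<gamma> i * v i k)) \<in> Wseq R d"
    using insert by (intro W_closed) auto
  then show ?case using insert by simp
qed

definition lin_on_W :: "(nat \<Rightarrow> real) \<Rightarrow> nat \<Rightarrow> (((nat \<Rightarrow> int) \<Rightarrow> complex) \<Rightarrow> ((nat \<Rightarrow> int) \<Rightarrow> complex)) \<Rightarrow> bool" where
  "lin_on_W R d A \<longleftrightarrow> (\<forall>x\<in>Wseq R d. \<forall>y\<in>Wseq R d. \<forall>a b::complex.
        A (\<lambda>k. a * x k + b * y k) = (\<lambda>k. a * A x k + b * A y k))"

lemma lin_sum: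
  assumes lin: "lin_on_W R d A" and "finite I" "\<And>i. i \<in> I \<Longrightarrow> v i \<in> Wseq R d"
  shows "A (\<lambda>j. \<Sum>i\<in>I. \<gamma> i * v i j) = (\<lambda>j. \<Sum>i\<in>I. \<gamma> i * A (v i) j)"
  using assms(2,3)
proof (induction I rule: finite_induct)
  case empty
  have z: "(\<lambda>k. 0) \<in> Wseq R d" by (rule W_zero)
  have "A (\<lambda>k. 0 * 0 + 0 * 0) = (\<lambda>k. 0 * A (\<lambda>k. 0) k + 0 * A (\<lambda>k. 0) k)"
    using lin[unfolded lin_on_W_def, rule_format, OF z z, of 0 0] by simp
  then show ?case by simp
next
  case (insert i0 I)
  have w: "(\<lambda>j. \<Sum>i\<in>I. \<gamma> i * v i j) \<in> Wseq R d" using insert by (intro W_sum) auto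
  have "A (\<lambda>k. \<gamma> i0 * v i0 k + 1 * (\<Sum>i\<in>I. \<gamma> i * v i k)) = (\<lambda>k. \<gamma> i0 * A (v i0) k + 1 * A (\<lambda>j. \<Sum>i\<in>I. \<gamma> i * v i j) k)"
    using lin[unfolded lin_on_W_def, rule_format, OF _ w, of "v i0" "\<gamma> i0" 1] insert.prems by auto
  then show ?case using insert by simp
qed

lemma summable_on_finsum:
  fixes f :: "'b \<Rightarrow> 'a \<Rightarrow> real"
  assumes "finite B" "\<And>b. b \<in> B \<Longrightarrow> f b summable_on A"
  shows "(\<lambda>x. \<Sum>b\<in>B. f b x) summable_on A"
  using assms by (induction B rule: finite_induct) (auto intro: summable_on_add)

lemma opnorm_bdd:
  assumes bl: "bounded_linear_WL2 R d A" and rk: "rank_lt_WL2 R d n A"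
  shows "bdd_above {L2norm d (\<lambda>k. c k - A c k) | c. c \<in> Wseq R d \<and> Wnorm R d c \<le> 1}"
proof -
  obtain C where C: "\<forall>c\<in>Wseq R d. L2norm d (A c) \<le> C * Wnorm R d c"
    using bl unfolding bounded_linear_WL2_def by blast
  obtain B where B: "finite B" "B \<subseteq> L2seq d"
    "\<forall>c\<in>Wseq R d. \<exists>\<alpha>. A c = (\<lambda>k. \<Sum>b\<in>B. \<alpha> b * b k)"
    using rk unfolding rank_lt_WL2_def by blast
  have main: "L2norm d (\<lambda>k. c k - A c k) \<le> sqrt (2 + 2 * C\<^sup>2)"
    if c: "c \<in> Wseq R d" "Wnorm R d c \<le> 1" for c
  proof -
    obtain \<alpha> where \<alpha>: "A c = (\<lambda>k. \<Sum>b\<in>B. \<alpha> b * b k)" using B c by blast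
    have sb: "(\<lambda>k. (cmod (b k))\<^sup>2) summable_on Zd d" if "b \<in> B" for b
      using B that by (auto simp: L2seq_def)
    have pt: "(cmod (A c k))\<^sup>2 \<le> real (card B) * (\<Sum>b\<in>B. (cmod (\<alpha> b))\<^sup>2 * (cmod (b k))\<^sup>2)" for k
    proof -
      have "cmod (A c k) \<le> (\<Sum>b\<in>B. cmod (\<alpha> b) * cmod (b k))"
        unfolding \<alpha> by (rule order_trans[OF norm_sum]) (simp add: norm_mult)
      then have "(cmod (A c k))\<^sup>2 \<le> (\<Sum>b\<in>B. cmod (\<alpha> b) * cmod (b k))\<^sup>2"
        by (intro power_mono) auto
      also have "\<dots> \<le> (\<Sum>b\<in>B. (cmod (\<alpha> b) * cmod (b k))\<^sup>2) * real (card B)"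
        by (rule sum_squared_le_sum_of_squares)
      finally show ?thesis by (simp add: power_mult_distrib mult.commute)
    qed
    have sAc: "(\<lambda>k. (cmod (A c k))\<^sup>2) summable_on Zd d"
    proof (rule summable_on_comparison_test)
      show "(\<lambda>k. real (card B) * (\<Sum>b\<in>B. (cmod (\<alpha> b))\<^sup>2 * (cmod (b k))\<^sup>2)) summable_on Zd d"
        using B sb by (intro summable_on_cmult_right summable_on_finsum) auto
    qed (use pt in auto)
    have sc: "(\<lambda>k. (cmod (c k))\<^sup>2) summable_on Zd d" using W_sq[OF c(1)] by simp
    have pt2: "(cmod (c k - A c k))\<^sup>2 \<le> 2 * (cmod (c k))\<^sup>2 + 2 * (cmod (A c k))\<^sup>2" for k
      using sq_add_le[of "c k" "- A c k"] by simp
    have s2: "(\<lambda>k. 2 * (cmod (c k))\<^sup>2 + 2 * (cmod (A c k))\<^sup>2) summable_on Zd d"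
      by (intro summable_on_add summable_on_cmult_right sc sAc)
    have sd: "(\<lambda>k. (cmod (c k - A c k))\<^sup>2) summable_on Zd d"
      by (rule summable_on_comparison_test[OF s2]) (use pt2 in auto)
    have "infsum (\<lambda>k. (cmod (c k - A c k))\<^sup>2) (Zd d) \<le> infsum (\<lambda>k. 2 * (cmod (c k))\<^sup>2 + 2 * (cmod (A c k))\<^sup>2) (Zd d)"
      by (intro infsum_mono sd s2 pt2)
    also have "\<dots> = 2 * infsum (\<lambda>k. (cmod (c k))\<^sup>2) (Zd d) + 2 * infsum (\<lambda>k. (cmod (A c k))\<^sup>2) (Zd d)"
      by (simp add: infsum_add summable_on_cmult_right sc sAc infsum_cmult_right)
    also have "infsum (\<lambda>k. (cmod (c k))\<^sup>2) (Zd d) \<le> 1"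
    proof -
      have w0: "0 \<le> Wnorm R d c" by (simp add: Wnorm_def W_sq(3)[OF c(1)])
      have "(Wnorm R d c)\<^sup>2 \<le> 1" using w0 c(2) by (simp add: power_le_one)
      then show ?thesis using W_sq(2)[OF c(1)] by linarith
    qed
    also have "infsum (\<lambda>k. (cmod (A c k))\<^sup>2) (Zd d) \<le> C\<^sup>2"
    proof -
      have e: "infsum (\<lambda>k. (cmod (A c k))\<^sup>2) (Zd d) = (L2norm d (A c))\<^sup>2"
        by (simp add: L2norm_def infsum_nonneg)
      have w0: "0 \<le> Wnorm R d c" by (simp add: Wnorm_def W_sq(3)[OF c(1)])
      have "L2norm d (A c) \<le> C * Wnorm R d c" using C c by blast
      then have "(L2norm d (A c))\<^sup>2 \<le> (C * Wnorm R d c)\<^sup>2"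
        using L2norm_nonneg by (intro power_mono) auto
      also have "\<dots> = C\<^sup>2 * (Wnorm R d c)\<^sup>2" by (simp add: power_mult_distrib)
      also have "\<dots> \<le> C\<^sup>2 * 1" using w0 c(2) by (intro mult_left_mono) (auto simp: power_le_one)
      finally show ?thesis using e by simp
    qed
    finally have "infsum (\<lambda>k. (cmod (c k - A c k))\<^sup>2) (Zd d) \<le> 2 + 2 * C\<^sup>2" by simp
    then show ?thesis unfolding L2norm_def by simp
  qed
  show ?thesis unfolding bdd_above_def using main by blast
qed

lemma opnorm_upper:
  assumes "bounded_linear_WL2 R d A" "rank_lt_WL2 R d n A" "c \<in> Wseq R d" "Wnorm R d c \<le> 1"
  shows "L2norm d (\<lambda>k. c k - A c k) \<le> op_norm_WL2 R d (\<lambda>c k. c k - A c k)"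
  unfolding op_norm_WL2_def by (rule cSup_upper) (use opnorm_bdd[OF assms(1,2)] assms(3,4) in auto)

lemma opnorm_nonneg:
  assumes "bounded_linear_WL2 R d A" "rank_lt_WL2 R d n A"
  shows "0 \<le> op_norm_WL2 R d (\<lambda>c k. c k - A c k)"
proof -
  have "Wnorm R d (\<lambda>k. 0) \<le> 1" by (simp add: Wnorm_def)
  then show ?thesis
    using opnorm_upper[OF assms W_zero] L2norm_nonneg order_trans by blast
qed

definition ev :: "(nat \<Rightarrow> int) \<Rightarrow> (nat \<Rightarrow> int) \<Rightarrow> complex" where
  "ev k = (\<lambda>j. if j = k then 1 else 0)"

lemma fin_supp_W:
  assumes "finite F" "F \<subseteq> Zd d" "\<And>j. j \<notin> F \<Longrightarrow> c j = 0"
  shows "c \<in> Wseq R d"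
    "infsum (\<lambda>k. sob_weight R d k * (cmod (c k))\<^sup>2) (Zd d) = (\<Sum>k\<in>F. sob_weight R d k * (cmod (c k))\<^sup>2)"
    "infsum (\<lambda>k. (cmod (c k))\<^sup>2) (Zd d) = (\<Sum>k\<in>F. (cmod (c k))\<^sup>2)"
proof -
  have "(\<lambda>k. sob_weight R d k * (cmod (c k))\<^sup>2) summable_on Zd d"
    using assms by (intro infsum_fin(2)[of F]) auto
  moreover have "\<forall>k. k \<notin> Zd d \<longrightarrow> c k = 0" using assms by auto
  ultimately show "c \<in> Wseq R d" by (simp add: Wseq_def)
  show "infsum (\<lambda>k. sob_weight R d k * (cmod (c k))\<^sup>2) (Zd d) = (\<Sum>k\<in>F. sob_weight R d k * (cmod (c k))\<^sup>2)"
    using assms by (intro infsum_fin(1)) auto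
  show "infsum (\<lambda>k. (cmod (c k))\<^sup>2) (Zd d) = (\<Sum>k\<in>F. (cmod (c k))\<^sup>2)"
    using assms by (intro infsum_fin(1)) auto
qed

lemma ev_sum:
  assumes "finite F"
  shows "(\<lambda>j. \<Sum>k\<in>F. \<gamma> k * ev k j) = (\<lambda>j. if j \<in> F then \<gamma> j else 0)"
proof
  fix j
  have "\<gamma> k * ev k j = (if k = j then \<gamma> k else 0)" for k by (auto simp: ev_def)
  then show "(\<Sum>k\<in>F. \<gamma> k * ev k j) = (if j \<in> F then \<gamma> j else 0)"
    using assms by (simp add: sum.delta)
qed

lemma upper_approx:
  assumes fS: "finite S" and SZ: "S \<subseteq> Zd d" and cS: "card S < n" and b: "\<beta> > 0"
    and w: "\<forall>k\<in>Zd d - S. 1 \<le> \<beta>\<^sup>2 * sob_weight R d k"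
  shows "approx_num R d n \<le> \<beta>"
proof -
  define P where "P c = (\<lambda>k. if k \<in> S then c k else 0)" for c :: "(nat \<Rightarrow> int) \<Rightarrow> complex"
  have L2W: "L2norm d c \<le> Wnorm R d c" if "c \<in> Wseq R d" for c
  proof -
    have "L2norm d c \<le> sqrt ((Wnorm R d c)\<^sup>2)"
      unfolding L2norm_def using W_sq(2)[OF that] by (rule real_sqrt_le_mono)
    also have "\<dots> = Wnorm R d c" by (simp add: Wnorm_def W_sq(3)[OF that])
    finally show ?thesis .
  qed
  have bl: "bounded_linear_WL2 R d P"
    unfolding bounded_linear_WL2_def
  proof (intro conjI)
    show "\<forall>x\<in>Wseq R d. \<forall>y\<in>Wseq R d. \<forall>a b. P (\<lambda>k. a * x k + b * y k) = (\<lambda>k. a * P x k + b * P y k)"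
      by (auto simp: P_def fun_eq_iff)
    have "L2norm d (P c) \<le> 1 * Wnorm R d c" if c: "c \<in> Wseq R d" for c
    proof -
      have sc: "(\<lambda>k. (cmod (c k))\<^sup>2) summable_on Zd d" using W_sq(1)[OF c] .
      have le: "(cmod (P c k))\<^sup>2 \<le> (cmod (c k))\<^sup>2" for k by (simp add: P_def)
      have sP: "(\<lambda>k. (cmod (P c k))\<^sup>2) summable_on Zd d"
        by (rule summable_on_comparison_test[OF sc]) (use le in auto)
      have "L2norm d (P c) \<le> L2norm d c"
        unfolding L2norm_def by (intro real_sqrt_le_mono infsum_mono sP sc le)
      then show ?thesis using L2W[OF c] by simp
    qed
    then show "\<exists>C. \<forall>c\<in>Wseq R d. L2norm d (P c) \<le> C * Wnorm R d c" by blast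
  qed
  have injS: "inj_on ev S" by (auto simp: inj_on_def ev_def fun_eq_iff)
  have rk: "rank_lt_WL2 R d n P"
    unfolding rank_lt_WL2_def
  proof (intro exI[of _ "ev ` S"] conjI ballI)
    show "finite (ev ` S)" using fS by simp
    show "card (ev ` S) < n" using cS card_image_le[OF fS, of ev] by linarith
    show "ev ` S \<subseteq> L2seq d"
    proof
      fix b assume "b \<in> ev ` S"
      then obtain k where k: "k \<in> S" "b = ev k" by auto
      have "b \<in> Wseq R d" using k SZ by (intro fin_supp_W(1)[of "{k}"]) (auto simp: ev_def)
      then show "b \<in> L2seq d" using W_sq(1) by (auto simp: Wseq_def L2seq_def)
    qed
    fix c assume c: "c \<in> Wseq R d"
    have "P c = (\<lambda>j. \<Sum>k\<in>S. c k * ev k j)" using ev_sum[OF fS, of c] by (simp add: P_def)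
    also have "\<dots> = (\<lambda>j. \<Sum>b\<in>ev ` S. c (inv_into S ev b) * b j)"
      by (simp add: sum.reindex[OF injS] inv_into_f_f[OF injS])
    finally show "\<exists>\<alpha>. P c = (\<lambda>k. \<Sum>b\<in>ev ` S. \<alpha> b * b k)"
      by (intro exI[of _ "\<lambda>b. c (inv_into S ev b)"])
  qed
  have opn: "op_norm_WL2 R d (\<lambda>c k. c k - P c k) \<le> \<beta>"
    unfolding op_norm_WL2_def
  proof (rule cSup_least)
    show "{L2norm d ((\<lambda>c k. c k - P c k) c) |c. c \<in> Wseq R d \<and> Wnorm R d c \<le> 1} \<noteq> {}"
    proof -
      have "(\<lambda>k. 0) \<in> Wseq R d \<and> Wnorm R d (\<lambda>k. 0) \<le> 1" using W_zero by (simp add: Wnorm_def)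
      then show ?thesis by blast
    qed
    fix x assume "x \<in> {L2norm d ((\<lambda>c k. c k - P c k) c) |c. c \<in> Wseq R d \<and> Wnorm R d c \<le> 1}"
    then obtain c where c: "c \<in> Wseq R d" "Wnorm R d c \<le> 1" and x: "x = L2norm d (\<lambda>k. c k - P c k)"
      by auto
    have sw: "(\<lambda>k. sob_weight R d k * (cmod (c k))\<^sup>2) summable_on Zd d" using c by (simp add: Wseq_def)
    have s1: "(\<lambda>k. \<beta>\<^sup>2 * (sob_weight R d k * (cmod (c k))\<^sup>2)) summable_on Zd d"
      by (intro summable_on_cmult_right sw)
    have le: "(cmod (c k - P c k))\<^sup>2 \<le> \<beta>\<^sup>2 * (sob_weight R d k * (cmod (c k))\<^sup>2)" if "k \<in> Zd d" for k
    proof (cases "k \<in> S")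
      case True
      then show ?thesis by (simp add: P_def sw_nonneg)
    next
      case False
      then have "1 \<le> \<beta>\<^sup>2 * sob_weight R d k" using w that by auto
      then have "1 * (cmod (c k))\<^sup>2 \<le> \<beta>\<^sup>2 * sob_weight R d k * (cmod (c k))\<^sup>2"
        by (intro mult_right_mono) auto
      then show ?thesis using False by (simp add: P_def mult.assoc)
    qed
    have s2: "(\<lambda>k. (cmod (c k - P c k))\<^sup>2) summable_on Zd d"
      by (rule summable_on_comparison_test[OF s1]) (use le in auto)
    have "infsum (\<lambda>k. (cmod (c k - P c k))\<^sup>2) (Zd d) \<le> infsum (\<lambda>k. \<beta>\<^sup>2 * (sob_weight R d k * (cmod (c k))\<^sup>2)) (Zd d)"
      by (intro infsum_mono s1 s2 le)
    also have "\<dots> = \<beta>\<^sup>2 * (Wnorm R d c)\<^sup>2"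
      by (simp add: infsum_cmult_right sw W_sq(4)[OF c(1)])
    also have "\<dots> \<le> \<beta>\<^sup>2 * 1"
    proof -
      have "0 \<le> Wnorm R d c" by (simp add: Wnorm_def W_sq(3)[OF c(1)])
      then have "(Wnorm R d c)\<^sup>2 \<le> 1" using c(2) by (simp add: power_le_one)
      then show ?thesis by (intro mult_left_mono) auto
    qed
    finally have "x \<le> sqrt (\<beta>\<^sup>2)" unfolding x L2norm_def by (intro real_sqrt_le_mono) simp
    then show "x \<le> \<beta>" using b by simp
  qed
  have "approx_num R d n \<le> op_norm_WL2 R d (\<lambda>c k. c k - P c k)"
    unfolding approx_num_def
  proof (rule cInf_lower)
    show "op_norm_WL2 R d (\<lambda>c k. c k - P c k) \<in> {op_norm_WL2 R d (\<lambda>c k. c k - A c k) |A. bounded_linear_WL2 R d A \<and> rank_lt_WL2 R d n A}"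
      using bl rk by blast
    show "bdd_below {op_norm_WL2 R d (\<lambda>c k. c k - A c k) |A. bounded_linear_WL2 R d A \<and> rank_lt_WL2 R d n A}"
      unfolding bdd_below_def using opnorm_nonneg by blast
  qed
  then show ?thesis using opn by linarith
qed

lemma lower_approx:
  assumes fT: "finite T" and TZ: "T \<subseteq> Zd d" and cT: "n \<le> card T" and n1: "1 \<le> n" and b: "\<beta> > 0"
    and w: "\<forall>k\<in>T. \<beta>\<^sup>2 * sob_weight R d k \<le> 1"
  shows "\<beta> \<le> approx_num R d n"
  unfolding approx_num_def
proof (rule cInf_greatest)
  let ?Z = "\<lambda>c::(nat \<Rightarrow> int) \<Rightarrow> complex. \<lambda>k::nat \<Rightarrow> int. 0::complex"
  have "bounded_linear_WL2 R d ?Z"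
    unfolding bounded_linear_WL2_def by (auto simp: L2norm_def intro: exI[of _ 0])
  moreover have "rank_lt_WL2 R d n ?Z"
    unfolding rank_lt_WL2_def using n1 by (intro exI[of _ "{}"]) auto
  ultimately show "{op_norm_WL2 R d (\<lambda>c k. c k - A c k) |A. bounded_linear_WL2 R d A \<and> rank_lt_WL2 R d n A} \<noteq> {}"
    by blast
  fix x assume "x \<in> {op_norm_WL2 R d (\<lambda>c k. c k - A c k) |A. bounded_linear_WL2 R d A \<and> rank_lt_WL2 R d n A}"
  then obtain A where bl: "bounded_linear_WL2 R d A" and rk: "rank_lt_WL2 R d n A"
    and x: "x = op_norm_WL2 R d (\<lambda>c k. c k - A c k)" by auto
  have lin: "lin_on_W R d A" using bl by (simp add: bounded_linear_WL2_def lin_on_W_def)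
  obtain B where B: "finite B" "card B < n" "B \<subseteq> L2seq d"
    "\<forall>c\<in>Wseq R d. \<exists>\<alpha>. A c = (\<lambda>k. \<Sum>b\<in>B. \<alpha> b * b k)"
    using rk unfolding rank_lt_WL2_def by blast
  obtain T' where T': "T' \<subseteq> T" "card T' = n" "finite T'"
    using obtain_subset_with_card_n[OF cT] by blast
  have evW: "ev k \<in> Wseq R d" if "k \<in> T'" for k
    using that T' TZ by (intro fin_supp_W(1)[of "{k}"]) (auto simp: ev_def)
  define a where "a k = (SOME \<alpha>. A (ev k) = (\<lambda>j. \<Sum>b\<in>B. \<alpha> b * b j))" for k
  have a: "A (ev k) = (\<lambda>j. \<Sum>b\<in>B. a k b * b j)" if "k \<in> T'" for k
  proof -
    have "\<exists>\<alpha>. A (ev k) = (\<lambda>j. \<Sum>b\<in>B. \<alpha> b * b j)" using B(4) evW[OF that] by blast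
    then show ?thesis unfolding a_def by (rule someI_ex)
  qed
  obtain \<gamma> where g: "\<exists>i\<in>T'. \<gamma> i \<noteq> 0" "\<forall>b\<in>B. (\<Sum>i\<in>T'. \<gamma> i * a i b) = 0"
    using lin_dep_exists[OF B(1) T'(3), of a] B(2) T'(2) by auto
  define N where "N = sqrt (\<Sum>k\<in>T'. sob_weight R d k * (cmod (\<gamma> k))\<^sup>2)"
  have Npos: "N > 0"
  proof -
    obtain i where i: "i \<in> T'" "\<gamma> i \<noteq> 0" using g by blast
    have "0 < sob_weight R d i * (cmod (\<gamma> i))\<^sup>2"
      using sw_ge1[of R d i] i by (intro mult_pos_pos) auto
    also have "\<dots> \<le> (\<Sum>k\<in>T'. sob_weight R d k * (cmod (\<gamma> k))\<^sup>2)"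
      using i T' by (intro member_le_sum) (auto simp: sw_nonneg)
    finally show ?thesis by (simp add: N_def)
  qed
  define \<gamma>1 where "\<gamma>1 k = \<gamma> k / complex_of_real N" for k
  define c1 where "c1 = (\<lambda>j. \<Sum>k\<in>T'. \<gamma>1 k * ev k j)"
  have c1e: "c1 = (\<lambda>j. if j \<in> T' then \<gamma>1 j else 0)" unfolding c1_def by (rule ev_sum[OF T'(3)])
  have c1W: "c1 \<in> Wseq R d" unfolding c1_def using T' evW by (intro W_sum) auto
  have Ac1: "A c1 = (\<lambda>j. 0)"
  proof -
    have "A c1 = (\<lambda>j. \<Sum>k\<in>T'. \<gamma>1 k * A (ev k) j)"
      unfolding c1_def using lin T'(3) evW by (rule lin_sum)
    also have "\<dots> = (\<lambda>j. \<Sum>k\<in>T'. \<gamma>1 k * (\<Sum>b\<in>B. a k b * b j))"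
      using a by (intro ext sum.cong) auto
    also have "\<dots> = (\<lambda>j. \<Sum>b\<in>B. (\<Sum>k\<in>T'. \<gamma> k * a k b) / complex_of_real N * b j)"
    proof (rule ext)
      fix j
      have "(\<Sum>k\<in>T'. \<gamma>1 k * (\<Sum>b\<in>B. a k b * b j)) = (\<Sum>k\<in>T'. \<Sum>b\<in>B. \<gamma> k * a k b / complex_of_real N * b j)"
        by (simp add: sum_distrib_left \<gamma>1_def mult.assoc)
      also have "\<dots> = (\<Sum>b\<in>B. \<Sum>k\<in>T'. \<gamma> k * a k b / complex_of_real N * b j)"
        by (rule sum.swap)
      also have "\<dots> = (\<Sum>b\<in>B. (\<Sum>k\<in>T'. \<gamma> k * a k b) / complex_of_real N * b j)"
        by (simp add: sum_distrib_right sum_divide_distrib)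
      finally show "(\<Sum>k\<in>T'. \<gamma>1 k * (\<Sum>b\<in>B. a k b * b j)) = (\<Sum>b\<in>B. (\<Sum>k\<in>T'. \<gamma> k * a k b) / complex_of_real N * b j)" .
    qed
    also have "\<dots> = (\<lambda>j. 0)" using g(2) by simp
    finally show ?thesis .
  qed
  have T'Z: "T' \<subseteq> Zd d" using T' TZ by auto
  have c1out: "\<And>j. j \<notin> T' \<Longrightarrow> c1 j = 0" by (simp add: c1e)
  have S1: "(\<Sum>k\<in>T'. sob_weight R d k * (cmod (c1 k))\<^sup>2) = 1"
  proof -
    have "(\<Sum>k\<in>T'. sob_weight R d k * (cmod (c1 k))\<^sup>2) = (\<Sum>k\<in>T'. sob_weight R d k * (cmod (\<gamma> k))\<^sup>2) / N\<^sup>2"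
      using Npos by (simp add: c1e \<gamma>1_def norm_divide power_divide sum_divide_distrib)
    also have "\<dots> = 1" using Npos unfolding N_def
      by (simp add: sum_nonneg sw_nonneg)
    finally show ?thesis .
  qed
  have Wc1: "Wnorm R d c1 = 1"
    unfolding Wnorm_def using fin_supp_W(2)[OF T'(3) T'Z c1out] S1 by simp
  have "\<beta> \<le> L2norm d c1"
  proof -
    have "\<beta>\<^sup>2 = \<beta>\<^sup>2 * (\<Sum>k\<in>T'. sob_weight R d k * (cmod (c1 k))\<^sup>2)"
      using S1 by simp
    also have "\<dots> = (\<Sum>k\<in>T'. (\<beta>\<^sup>2 * sob_weight R d k) * (cmod (c1 k))\<^sup>2)"
      by (simp add: sum_distrib_left mult.assoc)
    also have "\<dots> \<le> (\<Sum>k\<in>T'. 1 * (cmod (c1 k))\<^sup>2)"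
      using w T' by (intro sum_mono mult_right_mono) auto
    also have "\<dots> = infsum (\<lambda>k. (cmod (c1 k))\<^sup>2) (Zd d)"
      using fin_supp_W(3)[OF T'(3) T'Z c1out] by simp
    finally have "sqrt (\<beta>\<^sup>2) \<le> L2norm d c1" unfolding L2norm_def by (rule real_sqrt_le_mono)
    then show ?thesis using b by simp
  qed
  also have "L2norm d c1 = L2norm d (\<lambda>k. c1 k - A c1 k)" by (simp add: Ac1)
  also have "\<dots> \<le> x" unfolding x using bl rk c1W Wc1 by (intro opnorm_upper) auto
  finally show "\<beta> \<le> x" .
qed

definition ext0 :: "nat \<Rightarrow> (nat \<Rightarrow> int) \<Rightarrow> (nat \<Rightarrow> int)" where
  "ext0 d f = (\<lambda>j. if j < d then f j else 0)"

definition zbox :: "nat \<Rightarrow> (nat \<Rightarrow> nat) \<Rightarrow> (nat \<Rightarrow> int) set" where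
  "zbox d M = PiE {..<d} (\<lambda>j. {- int (M j)..int (M j)})"

lemma finite_zbox: "finite (zbox d M)"
  unfolding zbox_def by (intro finite_PiE) auto

lemma ext0_inj: "inj_on (ext0 d) (zbox d M)"
proof (rule inj_onI)
  fix f g assume fg: "f \<in> zbox d M" "g \<in> zbox d M" "ext0 d f = ext0 d g"
  show "f = g"
  proof (rule PiE_ext[OF fg(1)[unfolded zbox_def] fg(2)[unfolded zbox_def]])
    fix i assume "i \<in> {..<d}"
    then show "f i = g i" using fun_cong[OF fg(3), of i] by (simp add: ext0_def)
  qed
qed

lemma ext0_Zd: "ext0 d f \<in> Zd d"
  by (simp add: ext0_def Zd_def)

lemma ext0_lt: "j < d \<Longrightarrow> ext0 d f j = f j"
  by (simp add: ext0_def)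

lemma zbox_cover:
  assumes "k \<in> Zd d" "\<forall>j<d. \<bar>k j\<bar> \<le> int (M j)"
  shows "k = ext0 d (restrict k {..<d})" "restrict k {..<d} \<in> zbox d M"
proof -
  show "k = ext0 d (restrict k {..<d})"
    using assms by (auto simp: ext0_def Zd_def fun_eq_iff)
  show "restrict k {..<d} \<in> zbox d M"
    using assms by (auto simp: zbox_def abs_le_iff)
qed

lemma card_zbox: "card (zbox d M) = (\<Prod>j<d. 2 * M j + 1)"
  unfolding zbox_def by (simp add: card_PiE nat_add_distrib nat_mult_distrib)

lemma sym_sum:
  fixes g :: "int \<Rightarrow> real"
  assumes "\<And>m. g (-m) = g m"
  shows "(\<Sum>m\<in>{- int M..int M}. g m) = g 0 + 2 * (\<Sum>m\<in>{1..M}. g (int m))"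
proof (induction M)
  case 0
  then show ?case by simp
next
  case (Suc M)
  have e: "{- int (Suc M)..int (Suc M)} = insert (int (Suc M)) (insert (- int (Suc M)) {- int M..int M})"
    by auto
  have "(\<Sum>m\<in>{- int (Suc M)..int (Suc M)}. g m) = g (int (Suc M)) + g (- int (Suc M)) + (\<Sum>m\<in>{- int M..int M}. g m)"
    unfolding e by (simp add: add.assoc)
  also have "g (- int (Suc M)) = g (int (Suc M))" by (rule assms)
  finally show ?case using Suc by simp
qed

lemma count_upper:
  fixes a :: "nat \<Rightarrow> real" and s lam :: real
  assumes a: "\<forall>j<d. a j > 0" and s: "s > 0" and l: "lam > 0"
  defines "S \<equiv> {k\<in>Zd d. (\<Sum>j<d. \<bar>real_of_int (k j)\<bar> powr a j) < s}"
  defines "M \<equiv> (\<lambda>j. nat \<lceil>s powr (1 / a j)\<rceil>)"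
  shows "finite S"
    "real (card S) \<le> exp (lam * s) * (\<Prod>j<d. \<Sum>m\<in>{- int (M j)..int (M j)}. exp (-(lam * \<bar>real_of_int m\<bar> powr a j)))"
proof -
  define t where "t f = (\<Sum>j<d. \<bar>real_of_int (f j)\<bar> powr a j)" for f :: "nat \<Rightarrow> int"
  define B' where "B' = {f \<in> zbox d M. t f < s}"
  have sub: "S \<subseteq> ext0 d ` B'"
  proof
    fix k assume k: "k \<in> S"
    then have kZ: "k \<in> Zd d" and ks: "t k < s" by (auto simp: S_def t_def)
    have kb: "\<forall>j<d. \<bar>k j\<bar> \<le> int (M j)"
    proof (intro allI impI)
      fix j assume j: "j < d"
      have "\<bar>real_of_int (k j)\<bar> powr a j \<le> t k"
        unfolding t_def using j by (intro member_le_sum) auto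
      then have lt: "\<bar>real_of_int (k j)\<bar> powr a j < s" using ks by linarith
      have aj: "a j > 0" using a j by auto
      have "\<bar>real_of_int (k j)\<bar> = (\<bar>real_of_int (k j)\<bar> powr a j) powr (1 / a j)"
        using aj by (simp add: powr_powr)
      also have "\<dots> \<le> s powr (1 / a j)"
        using lt aj by (intro powr_mono2) auto
      also have "\<dots> \<le> real (M j)" unfolding M_def by linarith
      finally show "\<bar>k j\<bar> \<le> int (M j)" by linarith
    qed
    have "t (restrict k {..<d}) = t k" unfolding t_def by (intro sum.cong) auto
    then have "restrict k {..<d} \<in> B'" using zbox_cover(2)[OF kZ kb] ks by (simp add: B'_def)
    then show "k \<in> ext0 d ` B'" using zbox_cover(1)[OF kZ kb] by blast
  qed
  have fB': "finite B'" using finite_zbox by (simp add: B'_def)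
  then show fS: "finite S" using sub finite_subset by blast
  have "card S \<le> card (ext0 d ` B')" using sub fB' by (intro card_mono) auto
  also have "\<dots> \<le> card B'" using fB' by (rule card_image_le)
  finally have "real (card S) \<le> real (card B')" by simp
  also have "real (card B') = (\<Sum>f\<in>zbox d M. if t f < s then 1 else 0)"
    unfolding B'_def using finite_zbox by (simp add: sum.If_cases Int_def)
  also have "\<dots> \<le> (\<Sum>f\<in>zbox d M. exp (lam * (s - t f)))"
  proof (intro sum_mono)
    fix f assume "f \<in> zbox d M"
    show "(if t f < s then 1 else 0) \<le> exp (lam * (s - t f))"
    proof (cases "t f < s")
      case True
      then have "0 \<le> lam * (s - t f)" using l by simp
      then have "1 \<le> exp (lam * (s - t f))" by simp
      then show ?thesis using True by simp
    qed simp
  qed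
  also have "\<dots> = (\<Sum>f\<in>zbox d M. exp (lam * s) * (\<Prod>j<d. exp (-(lam * \<bar>real_of_int (f j)\<bar> powr a j))))"
  proof (intro sum.cong refl)
    fix f
    have "exp (lam * (s - t f)) = exp (lam * s) * exp (-(\<Sum>j<d. lam * \<bar>real_of_int (f j)\<bar> powr a j))"
      by (simp add: t_def sum_distrib_left right_diff_distrib exp_diff exp_minus field_simps)
    also have "exp (-(\<Sum>j<d. lam * \<bar>real_of_int (f j)\<bar> powr a j)) = (\<Prod>j<d. exp (-(lam * \<bar>real_of_int (f j)\<bar> powr a j)))"
      by (simp add: exp_sum sum_negf[symmetric])
    finally show "exp (lam * (s - t f)) = exp (lam * s) * (\<Prod>j<d. exp (-(lam * \<bar>real_of_int (f j)\<bar> powr a j)))" .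
  qed
  also have "\<dots> = exp (lam * s) * (\<Prod>j<d. \<Sum>m\<in>{- int (M j)..int (M j)}. exp (-(lam * \<bar>real_of_int m\<bar> powr a j)))"
    by (simp add: sum_distrib_left[symmetric] zbox_def prod_sum_PiE)
  finally show "real (card S) \<le> exp (lam * s) * (\<Prod>j<d. \<Sum>m\<in>{- int (M j)..int (M j)}. exp (-(lam * \<bar>real_of_int m\<bar> powr a j)))" .
qed

definition cc :: "real \<Rightarrow> real" where
  "cc a = (if 1 \<le> a then 1 + 1/(2*a) else 1 + 2 * (1/a) * ((1/a + 1) / exp 1) powr (1/a + 1))"

lemma Z_bound:
  fixes a lam :: real
  assumes a: "a > 0" and l: "lam > 0"
  shows "(\<Sum>m\<in>{- int M..int M}. exp (-(lam * \<bar>real_of_int m\<bar> powr a))) \<le> 1 + 2 * cc a * lam powr (-(1/a))"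
proof -
  define y where "y = lam powr (-(1/a))"
  have y: "y > 0" using l by (simp add: y_def)
  have e: "lam * real m powr a = (real m / y) powr a" for m :: nat
  proof -
    have "y powr a = lam powr (-1)" using a l by (simp add: y_def powr_powr)
    then have "y powr a = 1 / lam" using l by (simp add: powr_minus_divide)
    then show ?thesis using y l by (simp add: powr_divide)
  qed
  have "(\<Sum>m\<in>{- int M..int M}. exp (-(lam * \<bar>real_of_int m\<bar> powr a)))
      = exp (-(lam * \<bar>real_of_int 0\<bar> powr a)) + 2 * (\<Sum>m\<in>{1..M}. exp (-(lam * \<bar>real_of_int (int m)\<bar> powr a)))"
    by (rule sym_sum) simp
  also have "(\<Sum>m\<in>{1..M}. exp (-(lam * \<bar>real_of_int (int m)\<bar> powr a))) = (\<Sum>m\<in>{1..M}. exp (-((real m / y) powr a)))"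
    by (intro sum.cong refl) (simp add: e[symmetric])
  also have "\<dots> \<le> cc a * y"
  proof (cases "1 \<le> a")
    case True
    then show ?thesis unfolding cc_def using sum_a_ge1[OF True y] by simp
  next
    case False
    then show ?thesis unfolding cc_def using sum_a_lt1[OF a _ y] by simp
  qed
  finally show ?thesis by (simp add: y_def)
qed

lemma RL1:
  fixes x :: real
  assumes x: "1 \<le> x"
  shows "2 * (1 + 2 * x * ((x + 1) / exp 1) powr (x + 1)) \<le> 7/8 * (2 powr (x + 1) * (2 + x) powr x)"
proof -
  define P where "P = (2 + x) powr x"
  have P3: "P \<ge> 3"
  proof -
    have "(2 + x) powr 1 \<le> (2 + x) powr x" using x by (intro powr_mono) auto
    then show ?thesis using x by (simp add: P_def)
  qed
  have ez: "exp z \<ge> (27/20 * z)\<^sup>2" if "z \<ge> 0" for z :: real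
  proof -
    have A: "z/2 \<le> exp (z/2 - 1)" using exp_ge_add_one_self[of "z/2-1"] by simp
    have B: "z/2 * exp 1 \<le> exp (z/2 - 1) * exp 1" using A by (rule mult_right_mono) simp
    have C: "exp (z/2 - 1) * exp 1 = exp (z/2)" by (simp add: mult_exp_exp)
    have "exp (z/2) \<ge> exp 1 * (z/2)" using B C by (metis mult.commute)
    moreover have "exp 1 * (z/2) \<ge> 27/10 * (z/2)" using e_gt_27 that by (intro mult_right_mono) auto
    ultimately have h: "exp (z/2) \<ge> 27/20 * z" by simp
    have "(27/20 * z)\<^sup>2 \<le> (exp (z/2))\<^sup>2" using h that by (intro power_mono) auto
    also have "(exp (z/2))\<^sup>2 = exp z" by (simp add: power2_eq_square flip: exp_add)
    finally show ?thesis .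
  qed
  have xp: "x + 1 > 0" using x by simp
  have "((x + 1) / exp 1) powr (x + 1) = (x + 1) * (x + 1) powr x / exp (x + 1)"
    using xp by (simp add: powr_divide powr_add powr_def[of "exp 1"] exp_add mult.commute)
  also have "\<dots> \<le> (x + 1) * P / exp (x + 1)"
    unfolding P_def using x by (intro divide_right_mono mult_left_mono powr_mono2) auto
  finally have h1: "((x + 1) / exp 1) powr (x + 1) \<le> (x + 1) * P / exp (x + 1)" .
  have h2: "4 * x * (x + 1) / exp (x + 1) \<le> 28/10"
  proof -
    have "exp (x + 1) \<ge> (27/20 * (x + 1))\<^sup>2" using ez[of "x+1"] x by simp
    moreover have "4 * x * (x + 1) \<le> 28/10 * (27/20 * (x + 1))\<^sup>2"
    proof -
      have a1: "4 * x * (x+1) \<le> 4 * (x+1) * (x+1)" using x by (intro mult_right_mono mult_left_mono) auto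
      have a2: "28/10 * (27/20 * (x + 1))\<^sup>2 = 5103/1000 * ((x+1)*(x+1))" by (simp add: power2_eq_square algebra_simps)
      have a3: "0 \<le> (x+1)*(x+1)" by simp
      show ?thesis using a1 a2 a3 by linarith
    qed
    ultimately have "4 * x * (x + 1) \<le> 28/10 * exp (x + 1)" by linarith
    then show ?thesis by (simp add: divide_le_eq)
  qed
  have "2 * (1 + 2 * x * ((x + 1) / exp 1) powr (x + 1)) \<le> 2 + 4 * x * ((x + 1) * P / exp (x + 1))"
  proof -
    have "4 * x * ((x + 1) / exp 1) powr (x + 1) \<le> 4 * x * ((x + 1) * P / exp (x + 1))"
      using h1 x by (intro mult_left_mono) auto
    then show ?thesis by simp
  qed
  also have "4 * x * ((x + 1) * P / exp (x + 1)) = (4 * x * (x + 1) / exp (x + 1)) * P" by simp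
  also have "\<dots> \<le> 28/10 * P" using h2 P3 by (intro mult_right_mono) auto
  also have "2 \<le> 2/3 * P" using P3 by simp
  also have "2/3 * P + 28/10 * P \<le> 7/8 * (4 * P)" using P3 by simp
  also have "7/8 * (4 * P) \<le> 7/8 * (2 powr (x + 1) * P)"
  proof -
    have "(2::real) powr 2 \<le> 2 powr (x + 1)" using x by (intro powr_mono) auto
    then have "4 \<le> (2::real) powr (x + 1)" by simp
    then show ?thesis using P3 by (intro mult_left_mono mult_right_mono) auto
  qed
  finally show ?thesis by (simp add: P_def)
qed

lemma lower_final:
  fixes R :: "nat \<Rightarrow> real" and d n :: nat and g :: real
  assumes d1: "d \<ge> 1" and Rp: "\<forall>j<d. R j > 0" and n1: "1 \<le> n"
    and gdef: "g = 1 / (\<Sum>j<d. 1 / R j)"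
  shows "1 / sqrt (1 + real d * real n powr (2 * g)) \<le> approx_num R d n"
proof -
  define N2 where "N2 = real n powr (2 * g)"
  have np: "real n > 0" using n1 by simp
  have spos: "(\<Sum>j<d. 1 / R j) > 0"
  proof (rule sum_pos)
    have "0 \<in> {..<d}" using d1 by simp
    then show "{..<d} \<noteq> {}" by blast
  qed (use Rp in auto)
  have gp: "g > 0" using spos gdef by simp
  have sumg: "(\<Sum>j<d. g / R j) = 1"
  proof -
    have "(\<Sum>j<d. g / R j) = g * (\<Sum>j<d. 1 / R j)" by (simp add: sum_distrib_left)
    then show ?thesis using spos gdef by simp
  qed
  define M where "M j = nat \<lfloor>real n powr (g / R j)\<rfloor>" for j
  define T where "T = ext0 d ` zbox d M"
  have fT: "finite T" using finite_zbox by (simp add: T_def)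
  have TZ: "T \<subseteq> Zd d" using ext0_Zd by (auto simp: T_def)
  have cT: "card T = (\<Prod>j<d. 2 * M j + 1)"
    unfolding T_def by (simp add: card_image[OF ext0_inj] card_zbox)
  have ge1: "real n powr (g / R j) \<ge> 1" if "j < d" for j
    using n1 gp Rp that by (intro ge_one_powr_ge_zero) auto
  have "real n = real n powr (\<Sum>j<d. g / R j)" using sumg np by simp
  also have "\<dots> = (\<Prod>j<d. real n powr (g / R j))" using np by (simp add: powr_sum)
  also have "\<dots> \<le> (\<Prod>j<d. real (2 * M j + 1))"
  proof (intro prod_mono conjI)
    fix j assume "j \<in> {..<d}"
    then have j: "j < d" by simp
    show "0 \<le> real n powr (g / R j)" by simp
    have "real (M j) \<ge> real n powr (g / R j) - 1" unfolding M_def using ge1[OF j] by linarith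
    then show "real n powr (g / R j) \<le> real (2 * M j + 1)" using ge1[OF j] by simp
  qed
  also have "\<dots> = real (card T)" by (simp add: cT)
  finally have ncT: "n \<le> card T" by linarith
  define \<beta> where "\<beta> = 1 / sqrt (1 + real d * N2)"
  have N2p: "N2 > 0" using np by (simp add: N2_def)
  have dN: "0 < 1 + real d * N2" using N2p by (simp add: add_pos_nonneg)
  have bp: "\<beta> > 0" using dN by (simp add: \<beta>_def)
  have w: "\<forall>k\<in>T. \<beta>\<^sup>2 * sob_weight R d k \<le> 1"
  proof
    fix k assume "k \<in> T"
    then obtain f where f: "f \<in> zbox d M" "k = ext0 d f" by (auto simp: T_def)
    have "sob_weight R d k = 1 + (\<Sum>j<d. \<bar>real_of_int (k j)\<bar> powr (2 * R j))"
      by (simp add: sob_weight_def)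
    also have "\<dots> \<le> 1 + (\<Sum>j<d. N2)"
    proof -
      have "\<bar>real_of_int (k j)\<bar> powr (2 * R j) \<le> N2" if j: "j < d" for j
      proof -
        have "f j \<in> {- int (M j)..int (M j)}" using PiE_mem[OF f(1)[unfolded zbox_def], of j] j by simp
        then have "\<bar>f j\<bar> \<le> int (M j)" by (simp add: abs_le_iff)
        moreover have "k j = f j" using f j by (simp add: ext0_lt)
        ultimately have h1: "\<bar>real_of_int (k j)\<bar> \<le> real (M j)" by linarith
        have "real (M j) \<le> real n powr (g / R j)" unfolding M_def using ge1[OF j] by linarith
        with h1 have "\<bar>real_of_int (k j)\<bar> \<le> real n powr (g / R j)" by linarith
        then have "\<bar>real_of_int (k j)\<bar> powr (2 * R j) \<le> (real n powr (g / R j)) powr (2 * R j)"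
          using Rp j by (intro powr_mono2) auto
        also have "\<dots> = N2"
        proof -
          have "R j \<noteq> 0" using Rp j by auto
          then have "g / R j * (2 * R j) = 2 * g" by (simp add: field_simps)
          then show ?thesis by (simp add: N2_def powr_powr)
        qed
        finally show ?thesis .
      qed
      then show ?thesis by (intro add_left_mono sum_mono) auto
    qed
    also have "\<dots> = 1 + real d * N2" by simp
    finally have "sob_weight R d k \<le> 1 + real d * N2" .
    then show "\<beta>\<^sup>2 * sob_weight R d k \<le> 1"
      using dN by (simp add: \<beta>_def power_divide divide_le_eq)
  qed
  show ?thesis using lower_approx[OF fT TZ ncT n1 bp w] by (simp add: \<beta>_def N2_def)
qed

lemma basic_facts:
  fixes R :: "nat \<Rightarrow> real" and d :: nat
  assumes d1: "d \<ge> 1" and Rp: "\<forall>j<d. R j > 0"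
    and u: "u = Max (R ` {..<d})" and v: "v = Min (R ` {..<d})" and p: "p = max (1/2) u"
    and g: "g = 1 / (\<Sum>j<d. 1 / R j)"
  shows "v > 0" "\<forall>j<d. v \<le> R j \<and> R j \<le> u" "v \<le> u" "1/2 \<le> p" "u \<le> p" "u > 0"
    "g > 0" "v \<le> g * real d" "g = 1 / (2 * (\<Sum>j<d. 1 / (2 * R j)))"
    "real d / (2 * u) \<le> (\<Sum>j<d. 1 / (2 * R j))" "(\<Sum>j<d. 1 / (2 * R j)) > 0"
proof -
  have fin: "finite (R ` {..<d})" by simp
  have "0 \<in> {..<d}" using d1 by simp
  then have ne2: "{..<d} \<noteq> {}" by blast
  then have ne: "R ` {..<d} \<noteq> {}" by simp
  have bnd: "\<forall>j<d. v \<le> R j \<and> R j \<le> u" using fin u v by auto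
  then show "\<forall>j<d. v \<le> R j \<and> R j \<le> u" .
  obtain j0 where j0: "j0 < d" "v = R j0" using Min_in[OF fin ne] v by auto
  show vp: "v > 0" using j0 Rp by auto
  have "v \<le> u" using bnd j0 by auto
  then show "v \<le> u" .
  show "1/2 \<le> p" "u \<le> p" using p by auto
  show up: "u > 0" using vp \<open>v \<le> u\<close> by linarith
  define D where "D = (\<Sum>j<d. 1 / (2 * R j))"
  have Dp: "D > 0" unfolding D_def using Rp by (intro sum_pos[OF _ ne2]) auto
  then show "(\<Sum>j<d. 1 / (2 * R j)) > 0" by (simp add: D_def)
  have s2: "(\<Sum>j<d. 1 / R j) = 2 * D" unfolding D_def by (simp add: sum_distrib_left)
  show gD: "g = 1 / (2 * (\<Sum>j<d. 1 / (2 * R j)))" using g s2 by (simp add: D_def)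
  show "g > 0" using gD Dp by (simp add: D_def)
  have "D \<le> (\<Sum>j<d. 1 / (2 * v))" unfolding D_def
    using bnd Rp vp by (intro sum_mono) (auto simp: field_simps)
  then have Dle: "D \<le> real d / (2 * v)" by simp
  have "(\<Sum>j<d. 1 / (2 * u)) \<le> D" unfolding D_def
    using bnd Rp up by (intro sum_mono) (auto simp: field_simps)
  then show "real d / (2 * u) \<le> (\<Sum>j<d. 1 / (2 * R j))" by (simp add: D_def)
  have "v \<le> real d / (2 * D)" using Dle Dp vp by (simp add: field_simps)
  then show "v \<le> g * real d" using gD by (simp add: D_def)
qed

lemma pow2_sq: "((2::real) powr t)\<^sup>2 = 2 powr (2 * t)"
  by (simp add: power2_eq_square powr_add[symmetric])

lemma four_powr: "(4::real) powr t = 2 powr (2 * t)"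
proof -
  have "(4::real) powr t = (2 powr 2) powr t" by simp
  also have "\<dots> = 2 powr (2 * t)" by (simp only: powr_powr)
  finally show ?thesis .
qed

lemma Q8_lemma:
  fixes N2 E v u p g x :: real and d :: nat
  assumes vp: "v > 0" and up: "u > 0" and pu: "u \<le> p" and p12: "1/2 \<le> p"
    and gd: "v \<le> g * real d" and gp: "g > 0"
    and E: "E = 4 powr (p / v) * 2 powr (u / v) * (1 + 1 / (2 * v)) powr (u / (2 * v^2)) * (2 * exp 1 * p) powr (1 / (2 * v))"
    and N2: "N2 > (E ^ d) powr (2 * g)"
    and x: "1 / (2 * u) \<le> x"
  shows "(N2 / exp 1) powr x > 8" "E \<ge> 1"
proof -
  define A1 where "A1 = (4::real) powr (p / v)"
  define A2 where "A2 = (2::real) powr (u / v)"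
  define A3 where "A3 = (1 + 1 / (2 * v)) powr (u / (2 * v^2))"
  define A4 where "A4 = (2 * exp 1 * p) powr (1 / (2 * v))"
  have ep: "exp 1 * p > 0" using p12 by simp
  have A1g: "A1 \<ge> 1" unfolding A1_def using vp pu up by (intro ge_one_powr_ge_zero) auto
  have A2g: "A2 \<ge> 1" unfolding A2_def using vp up by (intro ge_one_powr_ge_zero) auto
  have A3g: "A3 \<ge> 1" unfolding A3_def using vp up by (intro ge_one_powr_ge_zero) auto
  have "2 * exp 1 * p \<ge> 1"
  proof -
    have "exp (1::real) \<ge> 2" using exp_ge_add_one_self[of 1] by simp
    then have "2 * exp 1 * p \<ge> 2 * 2 * (1/2)" using p12 by (intro mult_mono) auto
    then show ?thesis by simp
  qed
  then have A4g: "A4 \<ge> 1" unfolding A4_def using vp by (intro ge_one_powr_ge_zero) auto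
  have EA: "E = A1 * A2 * A3 * A4" by (simp add: E A1_def A2_def A3_def A4_def)
  have A12: "A1 * A2 \<ge> 1" using A1g A2g by (metis mult_mono' mult.right_neutral zero_le_one order_trans)
  have A123: "A1 * A2 * A3 \<ge> 1" using A12 A3g by (metis mult_mono' mult.right_neutral zero_le_one order_trans)
  have E1: "E \<ge> 1" unfolding EA using A123 A4g by (metis mult_mono' mult.right_neutral zero_le_one order_trans)
  then show "E \<ge> 1" .
  have Ep: "E > 0" using E1 by simp
  have "E powr (2 * v) = A1 powr (2 * v) * A2 powr (2 * v) * A3 powr (2 * v) * A4 powr (2 * v)"
    unfolding EA using A1g A2g A3g A4g by (simp add: powr_mult)
  moreover have "A1 powr (2 * v) = 2 powr (4 * p)"
    unfolding A1_def four_powr using vp by (simp add: powr_powr)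
  moreover have "A2 powr (2 * v) = 2 powr (2 * u)"
    unfolding A2_def using vp by (simp add: powr_powr mult.commute)
  moreover have "A3 powr (2 * v) \<ge> 1" using A3g vp by (intro ge_one_powr_ge_zero) auto
  moreover have "A4 powr (2 * v) = 2 * exp 1 * p"
    unfolding A4_def using vp ep by (simp add: powr_powr)
  ultimately have "E powr (2 * v) \<ge> 2 powr (4 * p) * 2 powr (2 * u) * 1 * (2 * exp 1 * p)"
    by (metis mult_left_mono mult_right_mono powr_ge_zero mult_nonneg_nonneg order_refl zero_le_one
        ep less_imp_le mult_pos_pos zero_less_numeral)
  moreover have "2 * exp 1 * p \<ge> exp 1" using p12 by simp
  ultimately have Ev: "E powr (2 * v) \<ge> exp 1 * 2 powr (4 * p + 2 * u)"
    by (smt (verit, best) mult_left_mono powr_add powr_ge_zero mult.commute mult.assoc)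
  have "(E ^ d) powr (2 * g) = E powr (2 * g * real d)"
    using Ep by (simp add: powr_realpow[symmetric] powr_powr mult.commute)
  also have "\<dots> \<ge> E powr (2 * v)" using E1 gd by (intro powr_mono) auto
  finally have "N2 > exp 1 * 2 powr (4 * p + 2 * u)" using N2 Ev by linarith
  then have G: "N2 / exp 1 > 2 powr (4 * p + 2 * u)" by (simp add: field_simps)
  have xp: "x > 0" using x up by (smt (verit) divide_pos_pos)
  have c0: "(N2 / exp 1) powr x > (2 powr (4 * p + 2 * u)) powr x"
    using G xp by (intro powr_less_mono2) auto
  have c1: "(2 powr (4 * p + 2 * u)) powr x = 2 powr ((4 * p + 2 * u) * x)" by (simp add: powr_powr)
  have c2: "2 powr ((4 * p + 2 * u) * x) \<ge> 2 powr 3"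
  proof (intro powr_mono)
    have "(4 * p + 2 * u) * x \<ge> (4 * p + 2 * u) * (1 / (2 * u))"
      using x up pu by (intro mult_left_mono) auto
    also have "(4 * p + 2 * u) * (1 / (2 * u)) = 2 * (p / u) + 1" using up by (simp add: field_simps)
    also have "2 * (p / u) + 1 \<ge> 3" using pu up by (simp add: field_simps)
    finally show "3 \<le> (4 * p + 2 * u) * x" by simp
  qed auto
  have c3: "(2::real) powr 3 = 8" by simp
  show "(N2 / exp 1) powr x > 8" using c0 c1 c2 c3 by linarith
qed

lemma C1_lemma:
  fixes K D UB u v p x :: real and d :: nat
  assumes vp: "v > 0" and up: "u > 0" and pu: "u \<le> p" and p12: "1/2 \<le> p" and vu: "v \<le> u"
    and UB: "UB = 2 powr (p + u) * (1 + (2 * v + 1) / (2 * v)) powr (u / (2 * v)) * sqrt (2 * exp 1 * u / real d)"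
    and d1: "d \<ge> 1" and Dge: "real d / (2 * u) \<le> D" and K: "K = D * UB\<^sup>2 / exp 1"
    and x1: "1 / (2 * u) \<le> x" and x2: "x \<le> 1 / (2 * v)"
  shows "2 * cc (1 / x) \<le> 7/8 * K powr x"
proof -
  define X where "X = 1 / (2 * v)"
  have xp: "x > 0" using x1 up by (smt (verit) divide_pos_pos)
  have Xx: "x \<le> X" using x2 by (simp add: X_def)
  have b: "1 + (2 * v + 1) / (2 * v) = 2 + X" using vp by (simp add: X_def field_simps)
  have Xp: "X > 0" using vp by (simp add: X_def)
  have dp: "real d > 0" using d1 by simp
  define K0 where "K0 = 2 powr (2 * (p + u)) * (2 + X) powr (u / v)"
  have UB2: "UB\<^sup>2 = K0 * (2 * exp 1 * u / real d)"
  proof -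
    have "UB\<^sup>2 = (2 powr (p + u))\<^sup>2 * ((2 + X) powr (u / (2 * v)))\<^sup>2 * (sqrt (2 * exp 1 * u / real d))\<^sup>2"
      unfolding UB b by (simp add: power_mult_distrib)
    also have "(2 powr (p + u))\<^sup>2 = 2 powr (2 * (p + u))" by (rule pow2_sq)
    also have "((2 + X) powr (u / (2 * v)))\<^sup>2 = (2 + X) powr (u / v)"
      using Xp vp by (simp add: power2_eq_square powr_add[symmetric])
    also have "(sqrt (2 * exp 1 * u / real d))\<^sup>2 = 2 * exp 1 * u / real d"
      using up dp by simp
    finally show ?thesis by (simp add: K0_def)
  qed
  have K0p: "K0 > 0" using Xp by (simp add: K0_def)
  have "K = K0 * (2 * u * D / real d)"
    unfolding K UB2 by (simp add: field_simps)
  moreover have "2 * u * D / real d \<ge> 1" using Dge up dp by (simp add: field_simps)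
  ultimately have KK0: "K \<ge> K0" using K0p by (metis mult_le_cancel_left1 less_imp_le not_le)
  have "K powr x \<ge> K0 powr x" using KK0 K0p xp by (intro powr_mono2) auto
  also have "K0 powr x = 2 powr (2 * (p + u) * x) * (2 + X) powr (u / v * x)"
    unfolding K0_def using Xp by (simp add: powr_mult powr_powr)
  finally have Kx: "K powr x \<ge> 2 powr (2 * (p + u) * x) * (2 + X) powr (u / v * x)" .
  have ux: "u * x \<ge> 1/2" using x1 up by (simp add: field_simps)
  have pxu: "p * x \<ge> u * x" using pu xp by (intro mult_right_mono) auto
  have px: "p * x \<ge> 1/2 * x" using p12 xp by (intro mult_right_mono) auto
  have dist: "2 * (p + u) * x = 2 * (p * x) + 2 * (u * x)" by (simp add: algebra_simps)
  have B1: "(2 + X) powr (u / v * x) \<ge> 1" using Xp vp up xp by (intro ge_one_powr_ge_zero) auto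
  show ?thesis
  proof (cases "x \<le> 1")
    case True
    have c: "cc (1 / x) = 1 + x / 2"
      using True xp by (simp add: cc_def field_simps)
    have "2 * (p + u) * x \<ge> 2" using ux pxu dist by linarith
    then have "2 powr (2 * (p + u) * x) \<ge> 2 powr 2" by (intro powr_mono) auto
    then have "2 powr (2 * (p + u) * x) \<ge> 4" by simp
    then have "4 * 1 \<le> 2 powr (2 * (p + u) * x) * (2 + X) powr (u / v * x)"
      using B1 by (intro mult_mono) auto
    then have "K powr x \<ge> 4" using Kx by linarith
    then show ?thesis using c True by simp
  next
    case False
    then have x1': "1 \<le> x" by simp
    have c: "cc (1 / x) = 1 + 2 * x * ((x + 1) / exp 1) powr (x + 1)"
      using False xp by (simp add: cc_def)
    have e1: "2 * (p + u) * x \<ge> x + 1" using ux px dist by linarith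
    have P1: "2 powr (2 * (p + u) * x) \<ge> 2 powr (x + 1)" using e1 by (intro powr_mono) auto
    have "(2 + X) powr (u / v * x) \<ge> (2 + X) powr x"
    proof (intro powr_mono)
      have "u / v \<ge> 1" using vu vp by simp
      then have "1 * x \<le> u / v * x" using xp by (intro mult_right_mono) auto
      then show "x \<le> u / v * x" by simp
    qed (use Xp in auto)
    also have "(2 + X) powr x \<ge> (2 + x) powr x" using Xx xp by (intro powr_mono2) auto
    finally have P2: "(2 + X) powr (u / v * x) \<ge> (2 + x) powr x" .
    have "K powr x \<ge> 2 powr (x + 1) * (2 + x) powr x"
    proof -
      have "2 powr (x + 1) * (2 + x) powr x \<le> 2 powr (2 * (p + u) * x) * (2 + X) powr (u / v * x)"
        using P1 P2 by (intro mult_mono) auto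
      then show ?thesis using Kx by linarith
    qed
    then show ?thesis using RL1[OF x1'] c by simp
  qed
qed

lemma upper_final:
  fixes R :: "nat \<Rightarrow> real" and d n :: nat
  assumes d1: "d \<ge> 1" and Rp: "\<forall>j<d. R j > 0"
    and u: "u = Max (R ` {..<d})" and v: "v = Min (R ` {..<d})" and p: "p = max (1/2) u"
    and g: "g = 1 / (\<Sum>j<d. 1 / R j)"
    and E: "E = 4 powr (p / v) * 2 powr (u / v) * (1 + 1 / (2 * v)) powr (u / (2 * v^2)) * (2 * exp 1 * p) powr (1 / (2 * v))"
    and nE: "real n > E ^ d"
  shows "real n powr g * approx_num R d n
      \<le> 2 powr (p + u) * (1 + (2 * v + 1) / (2 * v)) powr (u / (2 * v)) * sqrt (2 * exp 1 * u / real d)"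
proof -
  note bf = basic_facts[OF d1 Rp u v p g]
  have vp: "v > 0" and bnd: "\<forall>j<d. v \<le> R j \<and> R j \<le> u" and vu: "v \<le> u" and p12: "1/2 \<le> p"
    and pu: "u \<le> p" and up: "u > 0" and gp: "g > 0" and gd: "v \<le> g * real d"
    using bf by auto
  define D where "D = (\<Sum>j<d. 1 / (2 * R j))"
  have gD: "g = 1 / (2 * D)" and Dge: "real d / (2 * u) \<le> D" and Dp: "D > 0"
    using bf by (auto simp: D_def)
  have E0: "E \<ge> 0" unfolding E by simp
  have n0: "real n > 0" using nE E0 by (smt (verit) zero_le_power)
  define N2 where "N2 = real n powr (2 * g)"
  have N2p: "N2 > 0" using n0 by (simp add: N2_def)
  have N2E: "N2 > (E ^ d) powr (2 * g)"
    unfolding N2_def using nE E0 gp by (intro powr_less_mono2) auto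
  define UB where "UB = 2 powr (p + u) * (1 + (2 * v + 1) / (2 * v)) powr (u / (2 * v)) * sqrt (2 * exp 1 * u / real d)"
  have UBp: "UB > 0"
  proof -
    have "1 + (2 * v + 1) / (2 * v) > 0" using vp by (simp add: add_pos_pos)
    moreover have "2 * exp 1 * u / real d > 0" using up d1 by simp
    ultimately show ?thesis unfolding UB_def by simp
  qed
  define s where "s = N2 / UB\<^sup>2"
  have sp: "s > 0" using N2p UBp by (simp add: s_def)
  define lam where "lam = D / s"
  have lp: "lam > 0" using Dp sp by (simp add: lam_def)
  define K where "K = D * UB\<^sup>2 / exp 1"
  define S where "S = {k\<in>Zd d. (\<Sum>j<d. \<bar>real_of_int (k j)\<bar> powr (2 * R j)) < s}"
  define M where "M = (\<lambda>j. nat \<lceil>s powr (1 / (2 * R j))\<rceil>)"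
  define Z where "Z j = (\<Sum>m\<in>{- int (M j)..int (M j)}. exp (-(lam * \<bar>real_of_int m\<bar> powr (2 * R j))))" for j
  have a2: "\<forall>j<d. 2 * R j > 0" using Rp by auto
  note CU = count_upper[OF a2 sp lp]
  have fS: "finite S" using CU(1) unfolding S_def .
  have cS: "real (card S) \<le> exp (lam * s) * (\<Prod>j<d. Z j)"
    using CU(2) unfolding S_def Z_def M_def .
  have Zlt: "Z j < (N2 / exp 1) powr (1 / (2 * R j))" if j: "j < d" for j
  proof -
    define x where "x = 1 / (2 * R j)"
    have Rj: "R j > 0" "v \<le> R j" "R j \<le> u" using Rp bnd j by auto
    have xp: "x > 0" using Rj by (simp add: x_def)
    have x1: "1 / (2 * u) \<le> x" using Rj unfolding x_def by (intro divide_left_mono) auto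
    have x2: "x \<le> 1 / (2 * v)" using Rj vp unfolding x_def by (intro divide_left_mono) auto
    have ix: "1 / x = 2 * R j" by (simp add: x_def)
    have Zb: "Z j \<le> 1 + 2 * cc (2 * R j) * lam powr (-(1 / (2 * R j)))"
      unfolding Z_def using Rj lp by (intro Z_bound) auto
    have C1: "2 * cc (1 / x) \<le> 7/8 * K powr x"
      using C1_lemma[OF vp up pu p12 vu UB_def d1 Dge K_def x1 x2] .
    have Qe: "lam powr (-x) * K powr x = (N2 / exp 1) powr x"
    proof -
      have Kp: "K > 0" using Dp UBp by (simp add: K_def)
      have "lam powr (-x) * K powr x = (1 / lam) powr x * K powr x"
        using lp by (simp add: powr_minus_divide powr_divide)
      also have "\<dots> = (K / lam) powr x" using lp Kp by (simp add: powr_mult[symmetric])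
      also have "K / lam = N2 / exp 1" using Dp sp UBp
        by (simp add: K_def lam_def s_def field_simps)
      finally show ?thesis .
    qed
    have Q8: "(N2 / exp 1) powr x > 8"
      using Q8_lemma(1)[OF vp up pu p12 gd gp E N2E x1] .
    have yp: "lam powr (-x) \<ge> 0" by simp
    have "Z j \<le> 1 + (2 * cc (1 / x)) * lam powr (-x)" using Zb by (simp add: ix x_def)
    also have "\<dots> \<le> 1 + (7/8 * K powr x) * lam powr (-x)"
      using C1 yp by (intro add_left_mono mult_right_mono) auto
    also have "\<dots> = 1 + 7/8 * (N2 / exp 1) powr x" using Qe by (simp add: mult.commute mult.left_commute)
    also have "\<dots> < (N2 / exp 1) powr x" using Q8 by simp
    finally show ?thesis by (simp add: x_def)
  qed
  have Z0: "Z j \<ge> 0" for j unfolding Z_def by (intro sum_nonneg) auto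
  have "0 \<in> {..<d}" using d1 by simp
  then have prodlt: "(\<Prod>j<d. Z j) < (\<Prod>j<d. (N2 / exp 1) powr (1 / (2 * R j)))"
    using Zlt Z0 N2p by (intro prod_mono_strict[of 0]) (auto simp: less_imp_le)
  also have "\<dots> = (N2 / exp 1) powr D"
    unfolding D_def using N2p by (simp add: powr_sum)
  also have "\<dots> = real n / exp D"
  proof -
    have "(N2 / exp 1) powr D = N2 powr D / exp 1 powr D" using N2p by (simp add: powr_divide)
    also have "N2 powr D = real n" using n0 gD Dp by (simp add: N2_def powr_powr)
    also have "exp 1 powr D = exp D" by (simp add: powr_def)
    finally show ?thesis .
  qed
  finally have pr: "(\<Prod>j<d. Z j) < real n / exp D" .
  have "lam * s = D" using sp by (simp add: lam_def)
  then have "real (card S) \<le> exp D * (\<Prod>j<d. Z j)" using cS by simp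
  also have "\<dots> < exp D * (real n / exp D)" using pr by (intro mult_strict_left_mono) auto
  also have "\<dots> = real n" by simp
  finally have cSn: "card S < n" by simp
  define \<beta> where "\<beta> = 1 / sqrt (1 + s)"
  have bp: "\<beta> > 0" using sp by (simp add: \<beta>_def)
  have SZ: "S \<subseteq> Zd d" by (auto simp: S_def)
  have w: "\<forall>k\<in>Zd d - S. 1 \<le> \<beta>\<^sup>2 * sob_weight R d k"
  proof
    fix k assume "k \<in> Zd d - S"
    then have "(\<Sum>j<d. \<bar>real_of_int (k j)\<bar> powr (2 * R j)) \<ge> s" by (auto simp: S_def)
    then have "sob_weight R d k \<ge> 1 + s" by (simp add: sob_weight_def)
    then show "1 \<le> \<beta>\<^sup>2 * sob_weight R d k" using sp by (simp add: \<beta>_def power_divide field_simps)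
  qed
  have ap: "approx_num R d n \<le> \<beta>" by (rule upper_approx[OF fS SZ cSn bp w])
  have ng: "real n powr g > 0" using n0 by simp
  have "real n powr g * approx_num R d n \<le> real n powr g * \<beta>"
    using ap ng by (intro mult_left_mono) auto
  also have "\<dots> \<le> real n powr g / sqrt s"
    using sp ng by (simp add: \<beta>_def divide_left_mono)
  also have "sqrt s = real n powr g / UB"
  proof -
    have "N2 = (real n powr g)\<^sup>2" using n0 by (simp add: N2_def power2_eq_square powr_add[symmetric])
    then have "s = (real n powr g / UB)\<^sup>2" by (simp add: s_def power_divide)
    then show ?thesis using ng UBp by simp
  qed
  also have "real n powr g / (real n powr g / UB) = UB" using ng by simp
  finally show ?thesis unfolding UB_def .
qed

theorem lemma3p5:
  fixes R :: "nat \<Rightarrow> real" and d :: nat and n :: nat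
  assumes "d \<ge> 1"
    and "\<forall>j<d. R j > 0"
  defines "u \<equiv> Max (R ` {..<d})"
    and "v \<equiv> Min (R ` {..<d})"
  defines "p \<equiv> max (1/2) u"
    and "g \<equiv> 1 / (\<Sum>j<d. 1 / R j)"
  defines "E \<equiv> 4 powr (p / v) * 2 powr (u / v) * (1 + 1 / (2 * v)) powr (u / (2 * v^2))
               * (2 * exp 1 * p) powr (1 / (2 * v))"
  assumes "real n > E ^ d"
  shows "2 powr (v - p) * sqrt (1 / (exp 1 * (real d + 2 * u)))
           \<le> real n powr g * approx_num R d n
       \<and> real n powr g * approx_num R d n
           \<le> 2 powr (p + u) * (1 + (2 * v + 1) / (2 * v)) powr (u / (2 * v))
              * sqrt (2 * exp 1 * u / real d)"
proof
  have d1: "d \<ge> 1" and Rp: "\<forall>j<d. R j > 0" and nE: "real n > E ^ d" using assms by auto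
  note ud = u_def[THEN meta_eq_to_obj_eq] and vd = v_def[THEN meta_eq_to_obj_eq]
    and pd = p_def[THEN meta_eq_to_obj_eq] and gd = g_def[THEN meta_eq_to_obj_eq]
    and Ed = E_def[THEN meta_eq_to_obj_eq]
  show "real n powr g * approx_num R d n
           \<le> 2 powr (p + u) * (1 + (2 * v + 1) / (2 * v)) powr (u / (2 * v))
              * sqrt (2 * exp 1 * u / real d)"
    by (rule upper_final[OF d1 Rp ud vd pd gd Ed nE])
  note bf = basic_facts[OF d1 Rp ud vd pd gd]
  have vp: "v > 0" and vu: "v \<le> u" and pu: "u \<le> p" and up: "u > 0" and gp: "g > 0"
    using bf by auto
  have E0: "E \<ge> 0" unfolding E_def by simp
  have n0: "real n > 0" using nE E0 by (smt (verit) zero_le_power)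
  then have n1: "1 \<le> n" by simp
  define N2 where "N2 = real n powr (2 * g)"
  have N21: "N2 \<ge> 1" unfolding N2_def using n1 gp by (intro ge_one_powr_ge_zero) auto
  have low: "1 / sqrt (1 + real d * N2) \<le> approx_num R d n"
    using lower_final[OF d1 Rp n1 gd] by (simp add: N2_def)
  have dN: "1 + real d * N2 > 0" using N21 by (smt (verit) mult_nonneg_nonneg of_nat_0_le_iff)
  have ng: "real n powr g > 0" using n0 by simp
  have N2sq: "N2 = (real n powr g)\<^sup>2" using n0 by (simp add: N2_def power2_eq_square powr_add[symmetric])
  have "2 powr (v - p) * sqrt (1 / (exp 1 * (real d + 2 * u))) \<le> 1 * sqrt (1 / (1 + real d))"
  proof (intro mult_mono)
    have "(2::real) powr (v - p) \<le> 2 powr 0" using vu pu by (intro powr_mono) auto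
    then show "(2::real) powr (v - p) \<le> 1" by simp
    have e2: "exp (1::real) \<ge> 2" using exp_ge_add_one_self[of 1] by simp
    have "1 + real d \<le> exp 1 * (real d + 2 * u)"
    proof -
      have "1 + real d \<le> 2 * (real d + 2 * u)" using d1 up by simp
      also have "\<dots> \<le> exp 1 * (real d + 2 * u)" using e2 up by (intro mult_right_mono) auto
      finally show ?thesis .
    qed
    then show "sqrt (1 / (exp 1 * (real d + 2 * u))) \<le> sqrt (1 / (1 + real d))"
      by (intro real_sqrt_le_mono divide_left_mono) auto
  qed (use up in auto)
  also have "\<dots> \<le> sqrt (N2 / (1 + real d * N2))"
  proof -
    have "1 / (1 + real d) \<le> N2 / (1 + real d * N2)"
      using N21 dN by (simp add: field_simps)
    then show ?thesis by simp
  qed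
  also have "sqrt (N2 / (1 + real d * N2)) = real n powr g * (1 / sqrt (1 + real d * N2))"
    using ng by (simp add: N2sq real_sqrt_divide)
  also have "\<dots> \<le> real n powr g * approx_num R d n"
    using low ng by (intro mult_left_mono) auto
  finally show "2 powr (v - p) * sqrt (1 / (exp 1 * (real d + 2 * u))) \<le> real n powr g * approx_num R d n" .
qed

end
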